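(* Let $x_0>0$ and $L>0$. There exist a unique $\lambda>0$ and a unique vertically symmetric admissible curve $\gamma=(x,y)$ on $[0,2L]$, parametrized by arc length, such that $\dot y(0)=\dot y(2L)=0$ and $$2+\frac{d^2(H^{-2})}{ds^2}=\lambda\quad\text{on }[0,2L],$$ if and only if $3x_0<L$. In that case $\lambda=\lambda(x_0,L)=\frac{2L}{L+x_0}$ and $\gamma=(x,y)$ is given, with $\sigma=\pi\sqrt{x_0/(L+x_0)}$, $k=L/\sin\sigma$ and $a(s)=\arcsin((s-L)/k)$, by $x(s)=-\frac k2\Big(\frac{\sigma}{\pi+\sigma}\sin\big(\tfrac{\pi+\sigma}{\sigma}a(s)\big)+\frac{\sigma}{\pi-\sigma}\sin\big(\tfrac{\pi-\sigma}{\sigma}a(s)\big)\Big)$, $y(s)=\frac k2\Big(\frac{\sigma}{\pi+\sigma}\cos\big(\tfrac{\pi+\sigma}{\sigma}a(s)\big)+\frac{\sigma}{\pi-\sigma}\cos\big(\tfrac{\pi-\sigma}{\sigma}a(s)\big)\Big)+\frac{\pi x_0}{\sigma\tan\sigma}$ for $s\in[0,2L]$.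
   Context: Notation: $(\xi,\eta)^\perp=(\eta,-\xi)$; for a regular curve $\gamma\in C^2([0,2L],\mathbb R^2)$, curvature $H=\langle\dot\gamma,\ddot\gamma^\perp\rangle/|\dot\gamma|^3$; strictly counterclockwise means $H>0$. A curve $\gamma=(x,y)$ is admissible if $\gamma\in C^\infty([0,2L],\mathbb R^2)$ is regular, strictly counterclockwise, injective, $\gamma(0)=(x_0,0)$, $\gamma(2L)=(-x_0,0)$, $y>0$ on $(0,2L)$. Vertically symmetric means the support is symmetric with respect to the axis $\{x=0\}$. Parametrized by arc length means $|\dot\gamma|\equiv1$. *)

theory Defs
  imports "HOL-Analysis.Analysis"
begin

definition dwithin :: "real \<Rightarrow> real \<Rightarrow> (real \<Rightarrow> real) \<Rightarrow> real \<Rightarrow> real" where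
  "dwithin a b f t = vector_derivative f (at t within {a..b})"

definition hderiv :: "real \<Rightarrow> real \<Rightarrow> nat \<Rightarrow> (real \<Rightarrow> real) \<Rightarrow> real \<Rightarrow> real" where
  "hderiv a b n f = (dwithin a b ^^ n) f"

definition smooth_int :: "real \<Rightarrow> real \<Rightarrow> (real \<Rightarrow> real) \<Rightarrow> bool" where
  "smooth_int a b f \<longleftrightarrow> (\<forall>n. \<forall>t\<in>{a..b}.
      (hderiv a b n f has_vector_derivative hderiv a b (Suc n) f t) (at t within {a..b}))"

definition curvature :: "real \<Rightarrow> real \<Rightarrow> (real \<Rightarrow> real) \<Rightarrow> (real \<Rightarrow> real) \<Rightarrow> real \<Rightarrow> real" where
  "curvature a b x y t =
     (hderiv a b 1 x t * hderiv a b 2 y t - hderiv a b 1 y t * hderiv a b 2 x t)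
     / (sqrt ((hderiv a b 1 x t)\<^sup>2 + (hderiv a b 1 y t)\<^sup>2)) ^ 3"

definition admissible :: "real \<Rightarrow> real \<Rightarrow> (real \<Rightarrow> real) \<Rightarrow> (real \<Rightarrow> real) \<Rightarrow> bool" where
  "admissible x0 L x y \<longleftrightarrow>
     smooth_int 0 (2*L) x \<and> smooth_int 0 (2*L) y \<and>
     (\<forall>t\<in>{0..2*L}. (hderiv 0 (2*L) 1 x t, hderiv 0 (2*L) 1 y t) \<noteq> (0, 0)) \<and>
     (\<forall>t\<in>{0..2*L}. curvature 0 (2*L) x y t > 0) \<and>
     inj_on (\<lambda>t. (x t, y t)) {0..2*L} \<and>
     x 0 = x0 \<and> y 0 = 0 \<and> x (2*L) = - x0 \<and> y (2*L) = 0 \<and>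
     (\<forall>t\<in>{0<..<2*L}. y t > 0)"

definition vert_symmetric :: "real \<Rightarrow> real \<Rightarrow> (real \<Rightarrow> real) \<Rightarrow> (real \<Rightarrow> real) \<Rightarrow> bool" where
  "vert_symmetric a b x y \<longleftrightarrow>
     (\<lambda>p. (- fst p, snd p)) ` ((\<lambda>t. (x t, y t)) ` {a..b}) = (\<lambda>t. (x t, y t)) ` {a..b}"

definition arclength_param :: "real \<Rightarrow> real \<Rightarrow> (real \<Rightarrow> real) \<Rightarrow> (real \<Rightarrow> real) \<Rightarrow> bool" where
  "arclength_param a b x y \<longleftrightarrow>
     (\<forall>t\<in>{a..b}. (hderiv a b 1 x t)\<^sup>2 + (hderiv a b 1 y t)\<^sup>2 = 1)"

definition solves :: "real \<Rightarrow> real \<Rightarrow> real \<Rightarrow> (real \<Rightarrow> real) \<Rightarrow> (real \<Rightarrow> real) \<Rightarrow> bool" where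
  "solves x0 L lam x y \<longleftrightarrow>
     lam > 0 \<and> admissible x0 L x y \<and> vert_symmetric 0 (2*L) x y \<and>
     arclength_param 0 (2*L) x y \<and>
     hderiv 0 (2*L) 1 y 0 = 0 \<and> hderiv 0 (2*L) 1 y (2*L) = 0 \<and>
     (\<forall>s\<in>{0..2*L}.
        2 + hderiv 0 (2*L) 2 (\<lambda>t. inverse ((curvature 0 (2*L) x y t)\<^sup>2)) s = lam)"

definition sol_sigma :: "real \<Rightarrow> real \<Rightarrow> real" where
  "sol_sigma x0 L = pi * sqrt (x0 / (L + x0))"

definition sol_k :: "real \<Rightarrow> real \<Rightarrow> real" where
  "sol_k x0 L = L / sin (sol_sigma x0 L)"

definition sol_a :: "real \<Rightarrow> real \<Rightarrow> real \<Rightarrow> real" where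
  "sol_a x0 L s = arcsin ((s - L) / sol_k x0 L)"

definition sol_x :: "real \<Rightarrow> real \<Rightarrow> real \<Rightarrow> real" where
  "sol_x x0 L s = (let \<sigma> = sol_sigma x0 L; k = sol_k x0 L; a = sol_a x0 L s in
     - (k / 2) * (\<sigma> / (pi + \<sigma>) * sin ((pi + \<sigma>) / \<sigma> * a)
                 + \<sigma> / (pi - \<sigma>) * sin ((pi - \<sigma>) / \<sigma> * a)))"

definition sol_y :: "real \<Rightarrow> real \<Rightarrow> real \<Rightarrow> real" where
  "sol_y x0 L s = (let \<sigma> = sol_sigma x0 L; k = sol_k x0 L; a = sol_a x0 L s in
     (k / 2) * (\<sigma> / (pi + \<sigma>) * cos ((pi + \<sigma>) / \<sigma> * a)
               + \<sigma> / (pi - \<sigma>) * cos ((pi - \<sigma>) / \<sigma> * a))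
     + pi * x0 / (\<sigma> * tan \<sigma>))"

end

theory Submission
  imports Defs "HOL-Complex_Analysis.Complex_Analysis"
begin

lemma hderiv_0[simp]: "hderiv a b 0 f = f" by (simp add: hderiv_def)
lemma hderiv_Suc: "hderiv a b (Suc n) f = dwithin a b (hderiv a b n f)"
  by (simp add: hderiv_def)

lemma dwithin_eq:
  assumes "a < b" "t \<in> {a..b}" "(f has_vector_derivative f') (at t within {a..b})"
  shows "dwithin a b f t = f'"
  using assms vector_derivative_within_closed_interval unfolding dwithin_def by blast

lemma dwithin_cong:
  assumes "a < b" "t \<in> {a..b}" "\<And>s. s \<in> {a..b} \<Longrightarrow> f s = g s"
    "(g has_vector_derivative g') (at t within {a..b})"
  shows "dwithin a b f t = g'"
  by (rule dwithin_eq[OF assms(1,2)], rule has_vector_derivative_transform[OF assms(2) _ assms(4)])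
     (use assms(3) in auto)

lemma smooth_from_holo:
  assumes "F holomorphic_on S" "open S" "\<And>t. t \<in> {a..b} \<Longrightarrow> complex_of_real t \<in> S"
    "\<And>t. t \<in> {a..b} \<Longrightarrow> g t = Re (F (of_real t))" "a < b"
  shows "smooth_int a b g"
proof -
  define G where "G n t = Re ((deriv ^^ n) F (of_real t))" for n t
  have D: "(G n has_vector_derivative G (Suc n) t) (at t within {a..b})" if "t \<in> {a..b}" for n t
  proof -
    have h: "(deriv ^^ n) F holomorphic_on S" by (rule holomorphic_higher_deriv[OF assms(1,2)])
    have "((deriv ^^ n) F has_field_derivative deriv ((deriv ^^ n) F) (of_real t)) (at (of_real t))"
      using h assms(2) assms(3)[OF that] holomorphic_derivI by blast
    then have "((\<lambda>x. (deriv ^^ n) F (of_real x)) has_vector_derivative (deriv ^^ Suc n) F (of_real t)) (at t within {a..b})"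
      by (simp add: has_vector_derivative_real_field)
    from bounded_linear.has_vector_derivative[OF bounded_linear_Re this]
    show ?thesis unfolding G_def .
  qed
  have E: "\<forall>t\<in>{a..b}. hderiv a b n g t = G n t" for n
  proof (induction n)
    case 0 then show ?case using assms(4) by (simp add: G_def)
  next
    case (Suc n)
    show ?case
    proof
      fix t assume t: "t \<in> {a..b}"
      show "hderiv a b (Suc n) g t = G (Suc n) t"
        unfolding hderiv_Suc by (rule dwithin_cong[OF assms(5) t _ D[OF t]]) (use Suc in auto)
    qed
  qed
  show ?thesis unfolding smooth_int_def
  proof (intro allI ballI)
    fix n t assume t: "t \<in> {a..b}"
    show "(hderiv a b n g has_vector_derivative hderiv a b (Suc n) g t) (at t within {a..b})"
    proof -
      have "hderiv a b (Suc n) g t = G (Suc n) t" using E t by blast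
      then show ?thesis
        by (metis E t D[OF t] has_vector_derivative_transform)
    qed
  qed
qed

lemma deriv_interior:
  assumes "(f has_real_derivative D) (at t within {a..b})" "a < t" "t < b"
  shows "(f has_real_derivative D) (at t)"
  using assms at_within_interior[of t "{a..b}"] by simp

lemma strict_inc_within:
  fixes f :: "real \<Rightarrow> real"
  assumes D: "\<And>t. t \<in> {a..b} \<Longrightarrow> (f has_real_derivative f' t) (at t within {a..b})"
    and uv: "a \<le> u" "u < v" "v \<le> b" and pos: "\<And>t. u < t \<Longrightarrow> t < v \<Longrightarrow> f' t > 0"
  shows "f u < f v"
proof (rule DERIV_pos_imp_increasing_open[OF uv(2)])
  fix t assume "u < t" "t < v"
  then show "\<exists>y. (f has_real_derivative y) (at t) \<and> 0 < y"
    using D[of t] pos[of t] uv deriv_interior[of f "f' t" t a b] by auto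
next
  have "continuous_on {a..b} f" using D by (rule DERIV_continuous_on)
  then show "continuous_on {u..v} f" by (rule continuous_on_subset) (use uv in auto)
qed

lemma strict_dec_within:
  fixes f :: "real \<Rightarrow> real"
  assumes D: "\<And>t. t \<in> {a..b} \<Longrightarrow> (f has_real_derivative f' t) (at t within {a..b})"
    and uv: "a \<le> u" "u < v" "v \<le> b" and neg: "\<And>t. u < t \<Longrightarrow> t < v \<Longrightarrow> f' t < 0"
  shows "f u > f v"
proof -
  have "(\<lambda>t. - f t) u < (\<lambda>t. - f t) v"
    by (rule strict_inc_within[where f'="\<lambda>t. - f' t"]) (use D uv neg in \<open>auto intro!: derivative_eq_intros\<close>)
  then show ?thesis by simp
qed

lemma same_deriv_const:
  fixes f g :: "real \<Rightarrow> real"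
  assumes "\<And>t. t \<in> {a..b} \<Longrightarrow> (f has_real_derivative d t) (at t within {a..b})"
    "\<And>t. t \<in> {a..b} \<Longrightarrow> (g has_real_derivative d t) (at t within {a..b})"
    "s \<in> {a..b}" "r \<in> {a..b}"
  shows "f s - g s = f r - g r"
proof -
  have "\<And>t. t \<in> {a..b} \<Longrightarrow> ((\<lambda>t. f t - g t) has_real_derivative 0) (at t within {a..b})"
    using assms(1,2) by (auto intro!: derivative_eq_intros)
  from has_field_derivative_zero_constant[OF convex_real_interval(5) this]
  obtain c where "\<forall>t\<in>{a..b}. f t - g t = c" by blast
  then show ?thesis using assms(3,4) by auto
qed

lemma deriv_unique_within:
  fixes f :: "real \<Rightarrow> real"
  assumes "a < b" "t \<in> {a..b}" "(f has_real_derivative D1) (at t within {a..b})"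
    "(f has_real_derivative D2) (at t within {a..b})"
  shows "D1 = D2"
  using dwithin_eq[OF assms(1,2)] assms(3,4) by (metis has_real_derivative_iff_has_vector_derivative)

lemma deriv_const_on_zero:
  fixes f :: "real \<Rightarrow> real"
  assumes "a < b" "t \<in> {a..b}" "(f has_real_derivative D) (at t within {a..b})"
    "\<And>s. s \<in> {a..b} \<Longrightarrow> f s = c"
  shows "D = 0"
proof -
  have "((\<lambda>s. c) has_real_derivative 0) (at t within {a..b})" by simp
  then have "(f has_real_derivative 0) (at t within {a..b})"
    by (rule has_field_derivative_transform_within[where d=1]) (use assms in auto)
  then show ?thesis using deriv_unique_within assms by blast
qed

definition asf :: "real \<Rightarrow> real \<Rightarrow> real \<Rightarrow> real" where
  "asf k L t = arcsin ((t - L) / k)"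

definition gX :: "real \<Rightarrow> real \<Rightarrow> real \<Rightarrow> real \<Rightarrow> real \<Rightarrow> real" where
  "gX e k w L t = e * k / 2 * (sin ((w + 1) * asf k L t) / (w + 1) + sin ((w - 1) * asf k L t) / (w - 1))"

definition gY :: "real \<Rightarrow> real \<Rightarrow> real \<Rightarrow> real \<Rightarrow> real \<Rightarrow> real" where
  "gY e k w L t = e * k / 2 * (- cos ((w + 1) * asf k L t) / (w + 1) - cos ((w - 1) * asf k L t) / (w - 1))"

lemma asf_deriv:
  assumes "k > 0" "\<bar>t - L\<bar> < k"
  shows "(asf k L has_real_derivative 1 / sqrt (k\<^sup>2 - (t - L)\<^sup>2)) (at t)"
proof -
  have b: "-1 < (t - L) / k" "(t - L) / k < 1" using assms by (auto simp: abs_less_iff field_simps)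
  have "((\<lambda>t. arcsin ((t - L) / k)) has_real_derivative inverse (sqrt (1 - ((t - L) / k)\<^sup>2)) * (1 / k)) (at t)"
    by (rule DERIV_chain2[where f=arcsin and g="\<lambda>t. (t - L) / k", OF DERIV_arcsin[OF b]]) (use assms(1) in \<open>auto intro!: derivative_eq_intros\<close>)
  moreover have "inverse (sqrt (1 - ((t - L) / k)\<^sup>2)) * (1 / k) = 1 / sqrt (k\<^sup>2 - (t - L)\<^sup>2)"
  proof -
    have "1 - ((t - L) / k)\<^sup>2 = (k\<^sup>2 - (t - L)\<^sup>2) / k\<^sup>2" using assms by (simp add: field_simps power2_eq_square)
    then have "sqrt (1 - ((t - L) / k)\<^sup>2) = sqrt (k\<^sup>2 - (t - L)\<^sup>2) / k"
      using assms by (simp add: real_sqrt_divide)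
    then show ?thesis using assms by (simp add: field_simps)
  qed
  ultimately show ?thesis unfolding asf_def by simp
qed

lemma cos_asf:
  assumes "k > 0" "\<bar>t - L\<bar> \<le> k"
  shows "cos (asf k L t) = sqrt (k\<^sup>2 - (t - L)\<^sup>2) / k"
proof -
  have b: "-1 \<le> (t - L) / k" "(t - L) / k \<le> 1" using assms by (auto simp: abs_le_iff field_simps)
  have "1 - ((t - L) / k)\<^sup>2 = (k\<^sup>2 - (t - L)\<^sup>2) / k\<^sup>2" using assms by (simp add: field_simps power2_eq_square)
  then show ?thesis unfolding asf_def using cos_arcsin[OF b] assms by (simp add: real_sqrt_divide)
qed

lemma sqrt_pos_k:
  assumes "k > 0" "\<bar>t - L\<bar> < k" shows "sqrt (k\<^sup>2 - (t - L)\<^sup>2) > 0"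
proof -
  have "(t - L)\<^sup>2 < k\<^sup>2" using assms by (simp add: abs_less_iff power2_eq_square) (smt (verit) mult_strict_mono' mult_minus_left mult_minus_right) 
  then show ?thesis by simp
qed

lemma aux_cancel: "(c::real) \<noteq> 0 \<Longrightarrow> x * (c * (1 / q)) / c = x / q"
  by simp

lemma gX_deriv:
  assumes "k > 0" "\<bar>t - L\<bar> < k" "w \<noteq> 1" "w \<noteq> -1"
  shows "(gX e k w L has_real_derivative e * cos (w * asf k L t)) (at t)"
proof -
  note A = asf_deriv[OF assms(1,2)]
  have s: "sqrt (k\<^sup>2 - (t - L)\<^sup>2) > 0" using sqrt_pos_k[OF assms(1,2)] .
  have w1: "w + 1 \<noteq> 0" "w - 1 \<noteq> 0" using assms by auto
  have c: "cos (asf k L t) = sqrt (k\<^sup>2 - (t - L)\<^sup>2) / k" using cos_asf[OF assms(1)] assms(2) by simp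
    have "cos ((w + 1) * asf k L t) + cos ((w - 1) * asf k L t) = 2 * cos (w * asf k L t) * cos (asf k L t)"
      by (simp add: algebra_simps cos_add cos_diff)
  note r = this
  show ?thesis
  proof -
    have "(gX e k w L has_real_derivative e * k / 2 * (cos ((w + 1) * asf k L t) * ((w + 1) * (1 / sqrt (k\<^sup>2 - (t - L)\<^sup>2))) / (w + 1) + cos ((w - 1) * asf k L t) * ((w - 1) * (1 / sqrt (k\<^sup>2 - (t - L)\<^sup>2))) / (w - 1))) (at t)"
      unfolding gX_def[abs_def] by (intro DERIV_cmult DERIV_add DERIV_cdivide DERIV_fun_sin A)
    moreover have "e * k / 2 * (cos ((w + 1) * asf k L t) * ((w + 1) * (1 / sqrt (k\<^sup>2 - (t - L)\<^sup>2))) / (w + 1) + cos ((w - 1) * asf k L t) * ((w - 1) * (1 / sqrt (k\<^sup>2 - (t - L)\<^sup>2))) / (w - 1)) = e * k / 2 * ((cos ((w + 1) * asf k L t) + cos ((w - 1) * asf k L t)) / sqrt (k\<^sup>2 - (t - L)\<^sup>2))"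
      using w1 by (simp only: aux_cancel minus_mult_left[symmetric] minus_minus add_divide_distrib) simp
    moreover have "e * k / 2 * ((cos ((w + 1) * asf k L t) + cos ((w - 1) * asf k L t)) / sqrt (k\<^sup>2 - (t - L)\<^sup>2)) = e * cos (w * asf k L t)"
      unfolding r c using s assms(1) by simp
    ultimately show ?thesis by metis
  qed
qed

lemma gY_deriv:
  assumes "k > 0" "\<bar>t - L\<bar> < k" "w \<noteq> 1" "w \<noteq> -1"
  shows "(gY e k w L has_real_derivative e * sin (w * asf k L t)) (at t)"
proof -
  note A = asf_deriv[OF assms(1,2)]
  have s: "sqrt (k\<^sup>2 - (t - L)\<^sup>2) > 0" using sqrt_pos_k[OF assms(1,2)] .
  have w1: "w + 1 \<noteq> 0" "w - 1 \<noteq> 0" using assms by auto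
  have c: "cos (asf k L t) = sqrt (k\<^sup>2 - (t - L)\<^sup>2) / k" using cos_asf[OF assms(1)] assms(2) by simp
    have "sin ((w + 1) * asf k L t) + sin ((w - 1) * asf k L t) = 2 * sin (w * asf k L t) * cos (asf k L t)"
      by (simp add: algebra_simps sin_add sin_diff)
  note r = this
  show ?thesis
  proof -
    have "(gY e k w L has_real_derivative e * k / 2 * (- (- sin ((w + 1) * asf k L t) * ((w + 1) * (1 / sqrt (k\<^sup>2 - (t - L)\<^sup>2)))) / (w + 1) - (- sin ((w - 1) * asf k L t) * ((w - 1) * (1 / sqrt (k\<^sup>2 - (t - L)\<^sup>2)))) / (w - 1))) (at t)"
      unfolding gY_def[abs_def] by (intro DERIV_cmult DERIV_diff DERIV_cdivide DERIV_minus DERIV_fun_cos A)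
    moreover have "e * k / 2 * (- (- sin ((w + 1) * asf k L t) * ((w + 1) * (1 / sqrt (k\<^sup>2 - (t - L)\<^sup>2)))) / (w + 1) - (- sin ((w - 1) * asf k L t) * ((w - 1) * (1 / sqrt (k\<^sup>2 - (t - L)\<^sup>2)))) / (w - 1)) = e * k / 2 * ((sin ((w + 1) * asf k L t) + sin ((w - 1) * asf k L t)) / sqrt (k\<^sup>2 - (t - L)\<^sup>2))"
      using w1 by (simp only: aux_cancel minus_mult_left[symmetric] minus_minus add_divide_distrib) simp
    moreover have "e * k / 2 * ((sin ((w + 1) * asf k L t) + sin ((w - 1) * asf k L t)) / sqrt (k\<^sup>2 - (t - L)\<^sup>2)) = e * sin (w * asf k L t)"
      unfolding r c using s assms(1) by simp
    ultimately show ?thesis by metis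
  qed
qed

locale params =
  fixes x0 L :: real
  assumes x0: "x0 > 0" and L: "L > 0" and small: "3 * x0 < L"
begin

definition "sg = sol_sigma x0 L"
definition "kk = sol_k x0 L"
definition "om = pi / sg"
definition "cc = x0 / (L + x0)"

lemma cc_bounds: "0 < cc" "cc < 1/4"
  using x0 L small by (auto simp: cc_def field_simps)

lemma sg_eq: "sg = pi * sqrt cc"
  by (simp add: sg_def sol_sigma_def cc_def)

lemma sg_bounds: "0 < sg" "sg < pi/2"
proof -
  have "sqrt cc < sqrt (1/4)" using cc_bounds by (simp only: real_sqrt_less_iff)
  also have "sqrt (1/4) = (1/2::real)" by (simp add: real_sqrt_divide)
  finally have "sqrt cc < 1/2" .
  then show "sg < pi/2" using sg_eq pi_gt_zero by simp
  show "0 < sg" using sg_eq cc_bounds by simp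
qed

lemma sin_sg: "0 < sin sg" "sin sg < 1"
proof -
  show "0 < sin sg" using sg_bounds by (intro sin_gt_zero) auto
  have "sin sg < sin (pi/2)" using sg_bounds by (intro sin_monotone_2pi) auto
  then show "sin sg < 1" by simp
qed

lemma kk_eq: "kk = L / sin sg" by (simp add: kk_def sol_k_def sg_def)

lemma kk_gt: "L < kk" "0 < kk"
  using sin_sg L by (auto simp: kk_eq field_simps)

lemma L_kk: "L / kk = sin sg" using sin_sg L by (simp add: kk_eq)

lemma om_sq: "om\<^sup>2 = 1 / cc"
  using sg_bounds cc_bounds by (simp add: om_def sg_eq power2_eq_square field_simps)

lemma om_gt: "om > 2"
proof -
  have "om = pi / sg" by (simp add: om_def)
  moreover have "pi / sg > pi / (pi/2)" using sg_bounds by (intro divide_strict_left_mono) auto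
  ultimately show ?thesis by simp
qed

lemma om_sg: "om * sg = pi" using sg_bounds by (simp add: om_def)

lemma asf_0: "asf kk L 0 = - sg"
proof -
  have "(0 - L) / kk = - sin sg" using L_kk by simp
  then have "asf kk L 0 = arcsin (- sin sg)" by (simp add: asf_def)
  also have "\<dots> = - sg" using sg_bounds sin_sg
    by (subst arcsin_minus) (auto intro: arcsin_sin)
  finally show ?thesis .
qed

lemma asf_2L: "asf kk L (2 * L) = sg"
proof -
  have "(2 * L - L) / kk = sin sg" using L_kk by simp
  then show ?thesis using sg_bounds by (simp add: asf_def arcsin_sin)
qed

lemma in_range: "t \<in> {0..2*L} \<Longrightarrow> \<bar>t - L\<bar> < kk"
  using kk_gt by (auto simp: abs_le_iff abs_less_iff)

lemma asf_refl: "\<bar>t - L\<bar> \<le> kk \<Longrightarrow> asf kk L (2 * L - t) = - asf kk L t"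
proof -
  assume a: "\<bar>t - L\<bar> \<le> kk"
  have "(2 * L - t - L) / kk = - ((t - L) / kk)"
    by (simp only: minus_divide_left) (simp add: algebra_simps)
  moreover have "-1 \<le> (t - L) / kk" "(t - L) / kk \<le> 1" using a kk_gt by (auto simp: abs_le_iff field_simps)
  ultimately show ?thesis by (simp add: asf_def arcsin_minus)
qed

lemma sol_x_gX: "sol_x x0 L t = gX (-1) kk om L t"
proof -
  have s: "sg \<noteq> 0" "pi + sg \<noteq> 0" "pi - sg \<noteq> 0" using sg_bounds pi_gt3 by auto
  have e1: "(pi + sg) / sg = om + 1" "(pi - sg) / sg = om - 1" using s by (simp_all add: om_def field_simps)
  have e2: "sg / (pi + sg) = 1 / (om + 1)" "sg / (pi - sg) = 1 / (om - 1)" using s by (simp_all add: om_def field_simps)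
  show ?thesis unfolding sol_x_def Let_def gX_def sg_def[symmetric] kk_def[symmetric] e1 e2
    by (simp add: sol_a_def asf_def kk_def)
qed

lemma sol_y_gY: "sol_y x0 L t = gY (-1) kk om L t + pi * x0 / (sg * tan sg)"
proof -
  have s: "sg \<noteq> 0" "pi + sg \<noteq> 0" "pi - sg \<noteq> 0" using sg_bounds pi_gt3 by auto
  have e1: "(pi + sg) / sg = om + 1" "(pi - sg) / sg = om - 1" using s by (simp_all add: om_def field_simps)
  have e2: "sg / (pi + sg) = 1 / (om + 1)" "sg / (pi - sg) = 1 / (om - 1)" using s by (simp_all add: om_def field_simps)
  show ?thesis unfolding sol_y_def Let_def gY_def sg_def[symmetric] kk_def[symmetric] e1 e2
    by (simp add: sol_a_def asf_def kk_def algebra_simps)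
qed

lemma kk_sin: "kk * sin sg = L" using sin_sg by (simp add: kk_eq)

lemma om_sq1: "om\<^sup>2 - 1 = L / x0"
  using om_sq x0 L by (simp add: cc_def field_simps)

lemma om_ne: "om + 1 \<noteq> 0" "om - 1 \<noteq> 0" "om \<noteq> 1" "om \<noteq> -1" using om_gt by auto

lemma frac_id: "1 / (om + 1) - 1 / (om - 1) = - 2 / (om\<^sup>2 - 1)"
  "1 / (om + 1) + 1 / (om - 1) = 2 * om / (om\<^sup>2 - 1)"
  using om_ne by (simp_all add: field_simps power2_eq_square)

lemma sol_x_0: "sol_x x0 L 0 = x0"
proof -
  have h: "(om + 1) * (- sg) = - (pi + sg)" "(om - 1) * (- sg) = - (pi - sg)"
    using om_sg by (simp_all add: algebra_simps)
  have "sol_x x0 L 0 = - kk / 2 * (sin sg * (1 / (om + 1) - 1 / (om - 1)))"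
    unfolding sol_x_gX gX_def asf_0 h by (simp add: sin_add sin_diff algebra_simps)
  also have "\<dots> = (kk * sin sg) / (om\<^sup>2 - 1)" unfolding frac_id by simp
  also have "\<dots> = x0" unfolding kk_sin om_sq1 using L x0 by simp
  finally show ?thesis .
qed

lemma sol_y_0: "sol_y x0 L 0 = 0"
proof -
  have h: "(om + 1) * (- sg) = - (pi + sg)" "(om - 1) * (- sg) = - (pi - sg)"
    using om_sg by (simp_all add: algebra_simps)
  have "gY (-1) kk om L 0 = - kk / 2 * (cos sg * (1 / (om + 1) + 1 / (om - 1)))"
    unfolding gY_def asf_0 h by (simp add: cos_add cos_diff algebra_simps)
  also have "\<dots> = - (kk * cos sg) * om / (om\<^sup>2 - 1)" unfolding frac_id by simp
  also have "\<dots> = - (kk * sin sg) * (cos sg / sin sg) * om * x0 / L"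
    unfolding om_sq1 using sin_sg L x0 by (simp add: field_simps)
  also have "\<dots> = - pi * x0 / (sg * tan sg)"
    unfolding kk_sin using L sg_bounds sin_sg by (simp add: om_def tan_def field_simps)
  finally show ?thesis unfolding sol_y_gY by simp
qed

lemma sol_x_refl: "\<bar>t - L\<bar> \<le> kk \<Longrightarrow> sol_x x0 L (2 * L - t) = - sol_x x0 L t"
proof -
  assume a: "\<bar>t - L\<bar> \<le> kk"
  show ?thesis unfolding sol_x_gX gX_def asf_refl[OF a] by (simp only: mult_minus_right sin_minus cos_minus) (simp add: algebra_simps)
qed

lemma sol_y_refl: "\<bar>t - L\<bar> \<le> kk \<Longrightarrow> sol_y x0 L (2 * L - t) = sol_y x0 L t"
proof -
  assume a: "\<bar>t - L\<bar> \<le> kk"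
  show ?thesis unfolding sol_y_gY gY_def asf_refl[OF a] by (simp only: mult_minus_right sin_minus cos_minus)
qed

lemma sol_x_2L: "sol_x x0 L (2 * L) = - x0"
  using sol_x_refl[of 0] sol_x_0 kk_gt L by simp

lemma sol_y_2L: "sol_y x0 L (2 * L) = 0"
  using sol_y_refl[of 0] sol_y_0 kk_gt L by simp

end

lemma sm_deriv:
  assumes "smooth_int a b f" "t \<in> {a..b}"
  shows "(hderiv a b n f has_real_derivative hderiv a b (Suc n) f t) (at t within {a..b})"
  using assms unfolding smooth_int_def has_real_derivative_iff_has_vector_derivative by blast

lemma start_dir:
  fixes y y1 :: "real \<Rightarrow> real"
  assumes L: "L > 0"
   and dy: "\<And>t. t \<in> {0..2*L} \<Longrightarrow> (y has_real_derivative y1 t) (at t within {0..2*L})"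
   and dy1: "(y1 has_real_derivative D) (at 0 within {0..2*L})"
   and z: "y1 0 = 0" "y 0 = 0" "D < 0" and pos: "\<And>t. t \<in> {0<..<2*L} \<Longrightarrow> y t > 0"
  shows False
proof -
  obtain d where d: "d > 0" "\<And>h. h > 0 \<Longrightarrow> 0 + h \<in> {0..2*L} \<Longrightarrow> h < d \<Longrightarrow> y1 0 > y1 (0 + h)"
    using has_real_derivative_neg_dec_right[OF dy1 \<open>D<0\<close>] by blast
  define e where "e = min d (2*L) / 2"
  have e: "0 < e" "e < d" "e < 2*L" using d L by (auto simp: e_def)
  have "y 0 > y e"
  proof (rule strict_dec_within[OF dy])
    fix t assume "0 < t" "t < e"
    then show "y1 t < 0" using d(2)[of t] e z by auto
  qed (use e in auto)
  moreover have "y e > 0" using pos e by auto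
  ultimately show False using z by simp
qed

lemma end_dir:
  fixes y y1 :: "real \<Rightarrow> real"
  assumes L: "L > 0"
   and dy: "\<And>t. t \<in> {0..2*L} \<Longrightarrow> (y has_real_derivative y1 t) (at t within {0..2*L})"
   and dy1: "(y1 has_real_derivative D) (at (2*L) within {0..2*L})"
   and z: "y1 (2*L) = 0" "y (2*L) = 0" "D < 0" and pos: "\<And>t. t \<in> {0<..<2*L} \<Longrightarrow> y t > 0"
  shows False
proof -
  obtain d where d: "d > 0" "\<And>h. h > 0 \<Longrightarrow> 2*L - h \<in> {0..2*L} \<Longrightarrow> h < d \<Longrightarrow> y1 (2*L) < y1 (2*L - h)"
    using has_real_derivative_neg_dec_left[OF dy1 \<open>D<0\<close>] by blast
  define e where "e = min d (2*L) / 2"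
  have e: "0 < e" "e < d" "e < 2*L" using d L by (auto simp: e_def)
  have "y (2*L - e) < y (2*L)"
  proof (rule strict_inc_within[OF dy])
    fix t assume "2*L - e < t" "t < 2*L"
    then show "y1 t > 0" using d(2)[of "2*L - t"] e z by auto
  qed (use e in auto)
  moreover have "y (2*L - e) > 0" using pos e by auto
  ultimately show False using z by simp
qed


lemma uniq_part1:
  assumes x0: "x0 > 0" and L: "L > 0" and S: "solves x0 L lam x y"
  shows "\<exists>x1 y1 H P Q. (\<forall>t\<in>{0..2*L}. (x has_real_derivative x1 t) (at t within {0..2*L})
      \<and> (y has_real_derivative y1 t) (at t within {0..2*L})
      \<and> (x1 has_real_derivative (- H t * y1 t)) (at t within {0..2*L})
      \<and> (y1 has_real_derivative (H t * x1 t)) (at t within {0..2*L})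
      \<and> (x1 t)\<^sup>2 + (y1 t)\<^sup>2 = 1 \<and> H t > 0 \<and> P t > 0 \<and> P t * H t = 1
      \<and> ((\<lambda>t. (P t)\<^sup>2) has_real_derivative 2 * Q t) (at t within {0..2*L})
      \<and> (Q has_real_derivative (lam - 2) / 2) (at t within {0..2*L})
      \<and> ((\<lambda>t. - (x1 t * P t) + y1 t * Q t) has_real_derivative lam / 2 * y1 t) (at t within {0..2*L})
      \<and> ((\<lambda>t. y1 t * P t + x1 t * Q t) has_real_derivative lam / 2 * x1 t) (at t within {0..2*L}))"
proof -
  let ?I = "{0..2*L}"
  have ab: "(0::real) < 2*L" using L by simp
  have lam: "lam > 0" and adm: "admissible x0 L x y" and al0: "arclength_param 0 (2*L) x y"
    and eq: "\<And>s. s \<in> ?I \<Longrightarrow> 2 + hderiv 0 (2*L) 2 (\<lambda>t. inverse ((curvature 0 (2*L) x y t)\<^sup>2)) s = lam"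
    using S unfolding solves_def by auto
  have smx: "smooth_int 0 (2*L) x" and smy: "smooth_int 0 (2*L) y"
    and curvpos: "\<And>t. t \<in> ?I \<Longrightarrow> curvature 0 (2*L) x y t > 0"
    using adm unfolding admissible_def by auto
  define x1 where "x1 = hderiv 0 (2*L) 1 x"
  define x2 where "x2 = hderiv 0 (2*L) 2 x"
  define x3 where "x3 = hderiv 0 (2*L) 3 x"
  define x4 where "x4 = hderiv 0 (2*L) 4 x"
  define y1 where "y1 = hderiv 0 (2*L) 1 y"
  define y2 where "y2 = hderiv 0 (2*L) 2 y"
  define y3 where "y3 = hderiv 0 (2*L) 3 y"
  define y4 where "y4 = hderiv 0 (2*L) 4 y"
  have dx: "(x has_real_derivative x1 t) (at t within ?I)" if "t \<in> ?I" for t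
    using sm_deriv[OF smx that, of 0] by (simp add: x1_def)
  have dx1: "(x1 has_real_derivative x2 t) (at t within ?I)" if "t \<in> ?I" for t
    using sm_deriv[OF smx that, of 1] by (simp add: x1_def x2_def eval_nat_numeral)
  have dx2: "(x2 has_real_derivative x3 t) (at t within ?I)" if "t \<in> ?I" for t
    using sm_deriv[OF smx that, of 2] by (simp add: x2_def x3_def eval_nat_numeral)
  have dx3: "(x3 has_real_derivative x4 t) (at t within ?I)" if "t \<in> ?I" for t
    using sm_deriv[OF smx that, of 3] by (simp add: x3_def x4_def eval_nat_numeral)
  have dy: "(y has_real_derivative y1 t) (at t within ?I)" if "t \<in> ?I" for t
    using sm_deriv[OF smy that, of 0] by (simp add: y1_def)
  have dy1: "(y1 has_real_derivative y2 t) (at t within ?I)" if "t \<in> ?I" for t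
    using sm_deriv[OF smy that, of 1] by (simp add: y1_def y2_def eval_nat_numeral)
  have dy2: "(y2 has_real_derivative y3 t) (at t within ?I)" if "t \<in> ?I" for t
    using sm_deriv[OF smy that, of 2] by (simp add: y2_def y3_def eval_nat_numeral)
  have dy3: "(y3 has_real_derivative y4 t) (at t within ?I)" if "t \<in> ?I" for t
    using sm_deriv[OF smy that, of 3] by (simp add: y3_def y4_def eval_nat_numeral)
  have al: "(x1 t)\<^sup>2 + (y1 t)\<^sup>2 = 1" if "t \<in> ?I" for t
    using al0 that by (simp add: arclength_param_def x1_def y1_def)
  have xy12: "x1 t * x2 t + y1 t * y2 t = 0" if t: "t \<in> ?I" for t
  proof -
    have "((\<lambda>t. (x1 t)\<^sup>2 + (y1 t)\<^sup>2) has_real_derivative 2 * (x1 t * x2 t + y1 t * y2 t)) (at t within ?I)"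
      by (rule DERIV_cong, (rule derivative_intros dx1[OF t] dy1[OF t])+) (simp add: algebra_simps)
    from deriv_const_on_zero[OF ab t this al] show ?thesis by simp
  qed
  define H where "H = (\<lambda>t. x1 t * y2 t - y1 t * x2 t)"
  have curvH: "curvature 0 (2*L) x y t = H t" if "t \<in> ?I" for t
    using al[OF that] by (simp add: curvature_def H_def x1_def x2_def y1_def y2_def)
  have Hpos: "H t > 0" if "t \<in> ?I" for t using curvpos[OF that] curvH[OF that] by simp
  have x2e: "x2 t = - H t * y1 t" if t: "t \<in> ?I" for t
  proof -
    have "x2 t + H t * y1 t = x2 t * (1 - ((x1 t)\<^sup>2 + (y1 t)\<^sup>2)) + x1 t * (x1 t * x2 t + y1 t * y2 t)"
      by (simp add: H_def algebra_simps power2_eq_square)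
    then show ?thesis using al[OF t] xy12[OF t] by simp
  qed
  have y2e: "y2 t = H t * x1 t" if t: "t \<in> ?I" for t
  proof -
    have "y2 t - H t * x1 t = y2 t * (1 - ((x1 t)\<^sup>2 + (y1 t)\<^sup>2)) + y1 t * (x1 t * x2 t + y1 t * y2 t)"
      by (simp add: H_def algebra_simps power2_eq_square)
    then show ?thesis using al[OF t] xy12[OF t] by simp
  qed
  define H1 where "H1 = (\<lambda>t. x1 t * y3 t - y1 t * x3 t)"
  have dH: "(H has_real_derivative H1 t) (at t within ?I)" if t: "t \<in> ?I" for t
    unfolding H_def
    by (rule DERIV_cong, (rule derivative_intros dx1[OF t] dy1[OF t] dx2[OF t] dy2[OF t])+) (simp add: H1_def algebra_simps)
  have dH1: "\<exists>D. (H1 has_real_derivative D) (at t within ?I)" if t: "t \<in> ?I" for t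
    unfolding H1_def
    by (rule exI, (rule derivative_intros dx1[OF t] dy1[OF t] dx3[OF t] dy3[OF t])+)
  define Q1 where "Q1 = (\<lambda>t. - 2 * H1 t / (H t)^3)"
  define qf where "qf = (\<lambda>t. inverse ((curvature 0 (2*L) x y t)\<^sup>2))"
  have dq: "((\<lambda>t. inverse ((H t)\<^sup>2)) has_real_derivative Q1 t) (at t within ?I)" if t: "t \<in> ?I" for t
  proof -
    have "H t \<noteq> 0" using Hpos[OF t] by simp
    then show ?thesis
      by (intro DERIV_cong[OF DERIV_inverse_fun[OF DERIV_power[OF dH[OF t]]]]) (auto simp: Q1_def field_simps power2_eq_square power3_eq_cube)
  qed
  have hd1: "dwithin 0 (2*L) qf t = Q1 t" if t: "t \<in> ?I" for t
    by (rule dwithin_cong[OF ab t _ dq[OF t, unfolded has_real_derivative_iff_has_vector_derivative]])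
       (simp add: qf_def curvH)
  have dQ1: "(Q1 has_real_derivative (lam - 2)) (at t within ?I)" if t: "t \<in> ?I" for t
  proof -
    have "H t \<noteq> 0" using Hpos[OF t] by simp
    obtain D1 where D1: "(H1 has_real_derivative D1) (at t within ?I)" using dH1[OF t] by blast
    have "\<exists>D. (Q1 has_real_derivative D) (at t within ?I)"
    proof -
      have h3: "H t ^ 3 \<noteq> 0" using \<open>H t \<noteq> 0\<close> by simp
      note DERIV_minus[OF DERIV_divide[OF DERIV_cmult[OF D1, of 2] DERIV_power[OF dH[OF t], of 3] h3]]
      then show ?thesis unfolding Q1_def by (intro exI) simp
    qed
    then obtain D where D: "(Q1 has_real_derivative D) (at t within ?I)" by blast
    have "hderiv 0 (2*L) 2 qf t = dwithin 0 (2*L) (dwithin 0 (2*L) qf) t"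
      by (simp add: hderiv_def numeral_2_eq_2)
    also have "\<dots> = D"
      by (rule dwithin_cong[OF ab t _ D[unfolded has_real_derivative_iff_has_vector_derivative]]) (simp add: hd1)
    finally have "D = lam - 2" using eq[OF t] by (simp add: qf_def)
    then show ?thesis using D by simp
  qed
  define P where "P = (\<lambda>t. 1 / H t)"
  define Q where "Q = (\<lambda>t. Q1 t / 2)"
  have dP: "(P has_real_derivative - H1 t / (H t)\<^sup>2) (at t within ?I)" if t: "t \<in> ?I" for t
  proof -
    have "H t \<noteq> 0" using Hpos[OF t] by simp
    then show ?thesis unfolding P_def
      by (intro DERIV_cong[OF DERIV_divide[OF DERIV_const dH[OF t]]]) (auto simp: field_simps power2_eq_square)
  qed
  have dQ: "(Q has_real_derivative (lam - 2) / 2) (at t within ?I)" if t: "t \<in> ?I" for t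
    unfolding Q_def by (rule DERIV_cong[OF DERIV_cdivide[OF dQ1[OF t]]]) simp
  show ?thesis
  proof (intro exI ballI conjI)
    fix t assume t: "t \<in> ?I"
    have Hn: "H t \<noteq> 0" using Hpos[OF t] by simp
    show "(x has_real_derivative x1 t) (at t within ?I)" by (rule dx[OF t])
    show "(y has_real_derivative y1 t) (at t within ?I)" by (rule dy[OF t])
    show "(x1 has_real_derivative - H t * y1 t) (at t within ?I)" using dx1[OF t] x2e[OF t] by simp
    show "(y1 has_real_derivative H t * x1 t) (at t within ?I)" using dy1[OF t] y2e[OF t] by simp
    show "(x1 t)\<^sup>2 + (y1 t)\<^sup>2 = 1" by (rule al[OF t])
    show "H t > 0" by (rule Hpos[OF t])
    show "P t > 0" using Hpos[OF t] by (simp add: P_def)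
    show "P t * H t = 1" using Hn by (simp add: P_def)
    show "((\<lambda>t. (P t)\<^sup>2) has_real_derivative 2 * Q t) (at t within ?I)"
      by (rule DERIV_cong[OF DERIV_power[OF dP[OF t]]]) (use Hn in \<open>simp add: P_def Q_def Q1_def field_simps power2_eq_square power3_eq_cube\<close>)
    show "(Q has_real_derivative (lam - 2) / 2) (at t within ?I)" by (rule dQ[OF t])
    show "((\<lambda>t. - (x1 t * P t) + y1 t * Q t) has_real_derivative lam / 2 * y1 t) (at t within ?I)"
      by (rule DERIV_cong, (rule derivative_intros dx1[OF t] dy1[OF t] dP[OF t] dQ[OF t])+)
         (use Hn in \<open>simp add: x2e[OF t] y2e[OF t] P_def Q_def Q1_def field_simps power2_eq_square power3_eq_cube\<close>)
    show "((\<lambda>t. y1 t * P t + x1 t * Q t) has_real_derivative lam / 2 * x1 t) (at t within ?I)"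
      by (rule DERIV_cong, (rule derivative_intros dx1[OF t] dy1[OF t] dP[OF t] dQ[OF t])+)
         (use Hn in \<open>simp add: x2e[OF t] y2e[OF t] P_def Q_def Q1_def field_simps power2_eq_square power3_eq_cube\<close>)
  qed
qed

lemma uniq:
  assumes x0: "x0 > 0" and L: "L > 0" and S: "solves x0 L lam x y"
  shows "3 * x0 < L \<and> lam = 2 * L / (L + x0) \<and> (\<forall>s\<in>{0..2*L}. x s = sol_x x0 L s \<and> y s = sol_y x0 L s)"
proof -
  let ?I = "{0..2*L}"
  have ab: "(0::real) < 2*L" using L by simp
  have I0: "0 \<in> ?I" and I2: "2*L \<in> ?I" using L by auto
  obtain x1 y1 H P Q where F: "\<forall>t\<in>{0..2*L}. (x has_real_derivative x1 t) (at t within {0..2*L})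
      \<and> (y has_real_derivative y1 t) (at t within {0..2*L})
      \<and> (x1 has_real_derivative (- H t * y1 t)) (at t within {0..2*L})
      \<and> (y1 has_real_derivative (H t * x1 t)) (at t within {0..2*L})
      \<and> (x1 t)\<^sup>2 + (y1 t)\<^sup>2 = 1 \<and> H t > 0 \<and> P t > 0 \<and> P t * H t = 1
      \<and> ((\<lambda>t. (P t)\<^sup>2) has_real_derivative 2 * Q t) (at t within {0..2*L})
      \<and> (Q has_real_derivative (lam - 2) / 2) (at t within {0..2*L})
      \<and> ((\<lambda>t. - (x1 t * P t) + y1 t * Q t) has_real_derivative lam / 2 * y1 t) (at t within {0..2*L})
      \<and> ((\<lambda>t. y1 t * P t + x1 t * Q t) has_real_derivative lam / 2 * x1 t) (at t within {0..2*L})"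
    using uniq_part1[OF x0 L S] by blast
  have dx: "\<And>t. t \<in> ?I \<Longrightarrow> (x has_real_derivative x1 t) (at t within ?I)" using F by blast
  have dy: "\<And>t. t \<in> ?I \<Longrightarrow> (y has_real_derivative y1 t) (at t within ?I)" using F by blast
  have dx1: "\<And>t. t \<in> ?I \<Longrightarrow> (x1 has_real_derivative (- H t * y1 t)) (at t within ?I)" using F by blast
  have dy1: "\<And>t. t \<in> ?I \<Longrightarrow> (y1 has_real_derivative (H t * x1 t)) (at t within ?I)" using F by blast
  have al: "\<And>t. t \<in> ?I \<Longrightarrow> (x1 t)\<^sup>2 + (y1 t)\<^sup>2 = 1" using F by blast
  have Hpos: "\<And>t. t \<in> ?I \<Longrightarrow> H t > 0" using F by blast
  have Ppos: "\<And>t. t \<in> ?I \<Longrightarrow> P t > 0" using F by blast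
  have PH: "\<And>t. t \<in> ?I \<Longrightarrow> P t * H t = 1" using F by blast
  have dP2: "\<And>t. t \<in> ?I \<Longrightarrow> ((\<lambda>t. (P t)\<^sup>2) has_real_derivative 2 * Q t) (at t within ?I)" using F by blast
  have dQ: "\<And>t. t \<in> ?I \<Longrightarrow> (Q has_real_derivative (lam - 2) / 2) (at t within ?I)" using F by blast
  have dF1: "\<And>t. t \<in> ?I \<Longrightarrow> ((\<lambda>t. - (x1 t * P t) + y1 t * Q t) has_real_derivative lam / 2 * y1 t) (at t within ?I)" using F by blast
  have dF2: "\<And>t. t \<in> ?I \<Longrightarrow> ((\<lambda>t. y1 t * P t + x1 t * Q t) has_real_derivative lam / 2 * x1 t) (at t within ?I)" using F by blast

  have lam: "lam > 0" and adm: "admissible x0 L x y"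
    and y10': "hderiv 0 (2*L) 1 y 0 = 0" and y1L': "hderiv 0 (2*L) 1 y (2*L) = 0"
    using S unfolding solves_def by auto
  have smy: "smooth_int 0 (2*L) y"
    and xs: "x 0 = x0" "x (2*L) = -x0" and ys: "y 0 = 0" "y (2*L) = 0"
    and ypos: "\<And>t. t \<in> {0<..<2*L} \<Longrightarrow> y t > 0"
    using adm unfolding admissible_def by auto
  have y1h: "y1 t = hderiv 0 (2*L) 1 y t" if t: "t \<in> ?I" for t
    using deriv_unique_within[OF ab t dy[OF t]] sm_deriv[OF smy t, of 0] by simp
  have y10: "y1 0 = 0" using y1h[OF I0] y10' by simp
  have y1L: "y1 (2*L) = 0" using y1h[OF I2] y1L' by simp
  have x10: "x1 0 = 1"
  proof -
    have "(x1 0)\<^sup>2 = 1" using al[OF I0] y10 by simp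
    then have "x1 0 = 1 \<or> x1 0 = -1" by (simp add: power2_eq_1_iff)
    moreover have "x1 0 \<noteq> -1"
    proof
      assume "x1 0 = -1"
      then show False using start_dir[OF L dy dy1[OF I0] y10 ys(1) _ ypos] Hpos[OF I0] by auto
    qed
    ultimately show ?thesis by blast
  qed
  have x1L: "x1 (2*L) = 1"
  proof -
    have "(x1 (2*L))\<^sup>2 = 1" using al[OF I2] y1L by simp
    then have "x1 (2*L) = 1 \<or> x1 (2*L) = -1" by (simp add: power2_eq_1_iff)
    moreover have "x1 (2*L) \<noteq> -1"
    proof
      assume "x1 (2*L) = -1"
      then show False using end_dir[OF L dy dy1[OF I2] y1L ys(2) _ ypos] Hpos[OF I2] by auto
    qed
    ultimately show ?thesis by blast
  qed
  have e1: "(- (x1 (2*L) * P (2*L)) + y1 (2*L) * Q (2*L)) - lam / 2 * y (2*L) = (- (x1 0 * P 0) + y1 0 * Q 0) - lam / 2 * y 0"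
    by (rule same_deriv_const[OF dF1]) (use L in \<open>auto intro!: derivative_eq_intros dy\<close>)
  have P0L: "P (2*L) = P 0" using e1 x10 x1L y10 y1L ys by simp
  have e2: "(y1 (2*L) * P (2*L) + x1 (2*L) * Q (2*L)) - lam / 2 * x (2*L) = (y1 0 * P 0 + x1 0 * Q 0) - lam / 2 * x 0"
    by (rule same_deriv_const[OF dF2]) (use L in \<open>auto intro!: derivative_eq_intros dx\<close>)
  have e3: "Q (2*L) - (lam - 2) / 2 * (2*L) = Q 0 - (lam - 2) / 2 * 0"
    by (rule same_deriv_const[OF dQ]) (use L in \<open>auto intro!: derivative_eq_intros\<close>)
  have lam_eq: "lam = 2 * L / (L + x0)"
  proof -
    have "Q (2*L) - Q 0 = - lam * x0" using e2 x10 x1L y10 y1L xs by (simp add: algebra_simps)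
    moreover have "Q (2*L) - Q 0 = (lam - 2) * L" using e3 by (simp add: field_simps)
    ultimately have "(lam - 2) * L = - lam * x0" by simp
    then have "lam * (L + x0) = 2 * L" by (simp add: algebra_simps)
    then show ?thesis using x0 L by (simp add: field_simps)
  qed
  define c where "c = x0 / (L + x0)"
  have c: "0 < c" "c < 1" using x0 L by (auto simp: c_def field_simps)
  have g: "(lam - 2) / 2 = - c" using x0 L by (simp add: lam_eq c_def field_simps)
  have Qt: "Q t = Q 0 - c * t" if t: "t \<in> ?I" for t
  proof -
    have "\<And>s. s \<in> ?I \<Longrightarrow> ((\<lambda>t. - c * t) has_real_derivative (lam - 2) / 2) (at s within ?I)"
      using g by (auto intro!: derivative_eq_intros)
    from same_deriv_const[OF dQ this t I0] show ?thesis by simp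
  qed
  have P2t: "(P t)\<^sup>2 = (P 0)\<^sup>2 + 2 * Q 0 * t - c * t\<^sup>2" if t: "t \<in> ?I" for t
  proof -
    have "\<And>s. s \<in> ?I \<Longrightarrow> ((\<lambda>t. 2 * Q 0 * t - c * t\<^sup>2) has_real_derivative 2 * Q s) (at s within ?I)"
    proof -
      fix s assume s: "s \<in> ?I"
      have "((\<lambda>t. 2 * Q 0 * t - c * t\<^sup>2) has_real_derivative 2 * Q 0 - 2 * c * s) (at s within ?I)"
        by (auto intro!: derivative_eq_intros)
      moreover have "2 * Q 0 - 2 * c * s = 2 * Q s" using Qt[OF s] by simp
      ultimately show "((\<lambda>t. 2 * Q 0 * t - c * t\<^sup>2) has_real_derivative 2 * Q s) (at s within ?I)"
        by simp
    qed
    from same_deriv_const[OF dP2 this t I0] show ?thesis by simp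
  qed
  have Q0: "Q 0 = c * L"
  proof -
    have "(P (2*L))\<^sup>2 = (P 0)\<^sup>2 + 2 * Q 0 * (2*L) - c * (2*L)\<^sup>2" by (rule P2t[OF I2])
    then have "4 * L * (Q 0 - c * L) = 0" using P0L by (auto simp: algebra_simps power2_eq_square)
    then show ?thesis using L by (simp add: algebra_simps)
  qed
  define k where "k = sqrt ((P 0)\<^sup>2 / c + L\<^sup>2)"
  have kL: "L < k" "0 < k"
  proof -
    have "(P 0)\<^sup>2 / c > 0" using Ppos[OF I0] c by simp
    then have "L\<^sup>2 < (P 0)\<^sup>2 / c + L\<^sup>2" by simp
    then have "sqrt (L\<^sup>2) < k" unfolding k_def by (simp only: real_sqrt_less_iff)
    then show "L < k" using L by simp
    then show "0 < k" using L by simp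
  qed
  have k2: "k\<^sup>2 = (P 0)\<^sup>2 / c + L\<^sup>2"
  proof -
    have "0 \<le> (P 0)\<^sup>2 / c + L\<^sup>2" using c by (intro add_nonneg_nonneg divide_nonneg_pos) auto
    then show ?thesis unfolding k_def by simp
  qed
  have inr: "\<bar>t - L\<bar> < k" if "t \<in> ?I" for t using that kL by (auto simp: abs_less_iff)
  have Pt: "P t = sqrt c * sqrt (k\<^sup>2 - (t - L)\<^sup>2)" if t: "t \<in> ?I" for t
  proof -
    have cP: "c * ((P 0)\<^sup>2 / c) = (P 0)\<^sup>2" using c by simp
    have "c * (k\<^sup>2 - (t - L)\<^sup>2) = c * ((P 0)\<^sup>2 / c) + c * L\<^sup>2 - c * (t - L)\<^sup>2"
      unfolding k2 by (simp add: algebra_simps)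
    also have "\<dots> = (P t)\<^sup>2" unfolding cP P2t[OF t] Q0 by (simp add: algebra_simps power2_eq_square)
    finally have "(P t)\<^sup>2 = c * (k\<^sup>2 - (t - L)\<^sup>2)" by simp
    then have "P t = sqrt (c * (k\<^sup>2 - (t - L)\<^sup>2))" using Ppos[OF t] by (metis abs_of_pos real_sqrt_abs)
    then show ?thesis by (simp add: real_sqrt_mult)
  qed
  define om where "om = 1 / sqrt c"
  have om1: "om > 1" using c by (simp add: om_def)
  define Phi where "Phi = (\<lambda>t. om * asf k L t)"
  have dPhi: "(Phi has_real_derivative H t) (at t within ?I)" if t: "t \<in> ?I" for t
  proof -
    have "(Phi has_real_derivative om * (1 / sqrt (k\<^sup>2 - (t - L)\<^sup>2))) (at t)"
      unfolding Phi_def by (rule DERIV_cmult[OF asf_deriv[OF kL(2) inr[OF t]]])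
    moreover have "om * (1 / sqrt (k\<^sup>2 - (t - L)\<^sup>2)) = H t"
    proof -
      have "H t = 1 / P t" using PH[OF t] Ppos[OF t] by (simp add: field_simps)
      then show ?thesis using Pt[OF t] by (simp add: om_def)
    qed
    ultimately show ?thesis by (simp add: has_field_derivative_at_within)
  qed
  define Cf where "Cf = (\<lambda>t. x1 t * cos (Phi t) + y1 t * sin (Phi t))"
  define Sf where "Sf = (\<lambda>t. y1 t * cos (Phi t) - x1 t * sin (Phi t))"
  have dC: "(Cf has_real_derivative 0) (at t within ?I)" if t: "t \<in> ?I" for t
    unfolding Cf_def
    apply (rule DERIV_cong)
     apply (rule derivative_intros dx1[OF t] dy1[OF t] dPhi[OF t])+
    apply (simp add: algebra_simps)
    done
  have dS: "(Sf has_real_derivative 0) (at t within ?I)" if t: "t \<in> ?I" for t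
    unfolding Sf_def
    apply (rule DERIV_cong)
     apply (rule derivative_intros dx1[OF t] dy1[OF t] dPhi[OF t])+
    apply (simp add: algebra_simps)
    done
  have Cc: "Cf t = Cf 0" if t: "t \<in> ?I" for t using same_deriv_const[OF dC _ t I0, of "\<lambda>_. 0"] by simp
  have Sc: "Sf t = Sf 0" if t: "t \<in> ?I" for t using same_deriv_const[OF dS _ t I0, of "\<lambda>_. 0"] by simp
  define sg where "sg = arcsin (L / k)"
  have Lk: "0 < L / k" "L / k < 1" using kL L by auto
  have sg: "0 < sg" "sg < pi / 2" "sin sg = L / k"
    using arcsin_less_arcsin[of 0 "L/k"] arcsin_lt_bounded[of "L/k"] Lk by (auto simp: sg_def)
  have Phi0: "Phi 0 = - (om * sg)"
    using Lk by (simp add: Phi_def asf_def sg_def arcsin_minus)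
  have Phi2: "Phi (2*L) = om * sg"
    by (simp add: Phi_def asf_def sg_def)
  have sin0: "sin (om * sg) = 0"
    using Sc[OF I2] unfolding Sf_def Phi0 Phi2 x10 x1L y10 y1L by simp
  define ep where "ep = cos (om * sg)"
  have ep2: "ep\<^sup>2 = 1" using sin_cos_squared_add[of "om * sg"] sin0 by (simp add: ep_def)
  have C0: "Cf 0 = ep" by (simp add: Cf_def Phi0 x10 y10 ep_def)
  have S0: "Sf 0 = 0" by (simp add: Sf_def Phi0 x10 y10 sin0)
  have x1e: "x1 t = ep * cos (Phi t)" if t: "t \<in> ?I" for t
  proof -
    have "Cf t * cos (Phi t) - Sf t * sin (Phi t) = x1 t * (cos (Phi t) * cos (Phi t) + sin (Phi t) * sin (Phi t))"
      by (simp add: Cf_def Sf_def algebra_simps) (metis distrib_left mult.right_neutral sin_cos_squared_add3)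
    then have "x1 t = Cf t * cos (Phi t) - Sf t * sin (Phi t)" by (simp only: sin_cos_squared_add3 mult_1_right)
    then show ?thesis using Cc[OF t] Sc[OF t] C0 S0 by simp
  qed
  have y1e: "y1 t = ep * sin (Phi t)" if t: "t \<in> ?I" for t
  proof -
    have "Cf t * sin (Phi t) + Sf t * cos (Phi t) = y1 t * (cos (Phi t) * cos (Phi t) + sin (Phi t) * sin (Phi t))"
      by (simp add: Cf_def Sf_def algebra_simps) (metis distrib_left mult.right_neutral sin_cos_squared_add3)
    then have "y1 t = Cf t * sin (Phi t) + Sf t * cos (Phi t)" by (simp only: sin_cos_squared_add3 mult_1_right)
    then show ?thesis using Cc[OF t] Sc[OF t] C0 S0 by simp
  qed
  obtain n :: int where n: "om * sg = of_int n * pi" using sin0 sin_zero_iff_int2 by blast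
  have npos: "n \<ge> 1"
  proof -
    have "om * sg > 0" using om1 sg by simp
    then have "of_int n * pi > 0" using n by simp
    then have "n > 0" by (simp add: zero_less_mult_iff)
    then show ?thesis by simp
  qed
  have n1: "n = 1"
  proof (rule ccontr)
    assume "n \<noteq> 1"
    then have n2: "n \<ge> 2" using npos by simp
    show False
    proof -
      have om0: "om > 0" using om1 by simp
      define a2 where "a2 = 2 * pi / om - sg"
      have "om * sg \<ge> 2 * pi" using n n2 by (simp add: mult_right_mono)
      then have sg_ge: "2 * pi / om \<le> sg" using om0 by (simp add: divide_le_eq mult.commute)
      have a2b: "- sg < a2" "a2 \<le> 0" using sg_ge om0 by (auto simp: a2_def)
      have oma2: "om * a2 = 2 * pi - om * sg" using om0 by (simp add: a2_def algebra_simps)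
      have sin_lt: "sin (- sg) < sin a2" using a2b sg by (intro sin_monotone_2pi) auto
      have sin_le: "sin a2 \<le> 0" using sin_monotone_2pi_le[of a2 0] a2b sg by auto
      define t2 where "t2 = L + k * sin a2"
      have t2: "0 < t2" "t2 < 2 * L"
      proof -
        have "k * sin a2 > k * (- (L / k))" using sin_lt sg(3) kL by (intro mult_strict_left_mono) auto
        then show "0 < t2" using kL by (simp add: t2_def)
        have "k * sin a2 \<le> 0" using sin_le kL by (simp add: mult_nonneg_nonpos)
        then show "t2 < 2 * L" using L by (simp add: t2_def)
      qed
      have t2I: "t2 \<in> ?I" using t2 by auto
      have asf2: "asf k L t2 = a2"
        using kL a2b sg by (simp add: asf_def t2_def arcsin_sin)
      have asf0: "asf k L 0 = - sg"
        using Lk by (simp add: asf_def sg_def arcsin_minus)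
      have dgY: "\<And>s. s \<in> ?I \<Longrightarrow> (gY ep k om L has_real_derivative y1 s) (at s within ?I)"
      proof -
        fix s assume s: "s \<in> ?I"
        have "(gY ep k om L has_real_derivative ep * sin (om * asf k L s)) (at s)"
          by (rule gY_deriv[OF kL(2) inr[OF s]]) (use om1 in auto)
        then show "(gY ep k om L has_real_derivative y1 s) (at s within ?I)"
          using y1e[OF s] by (simp add: Phi_def has_field_derivative_at_within)
      qed
      have yt2: "y t2 = gY ep k om L t2 - gY ep k om L 0"
        using same_deriv_const[OF dy dgY t2I I0] ys by simp
      have co: "cos (om * a2) = ep" "sin (om * a2) = 0"
        unfolding oma2 by (simp_all add: ep_def cos_diff sin_diff sin0)
      have c1: "cos ((om + 1) * a2) = ep * cos a2" "cos ((om - 1) * a2) = ep * cos a2"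
        by (simp_all add: distrib_right left_diff_distrib cos_add cos_diff co)
      have c2: "cos ((om + 1) * (- sg)) = ep * cos sg" "cos ((om - 1) * (- sg)) = ep * cos sg"
        by (simp_all add: distrib_right left_diff_distrib cos_add cos_diff ep_def sin0)
      have w: "om + 1 \<noteq> 0" "om - 1 \<noteq> 0" using om1 by auto
      have "gY ep k om L t2 - gY ep k om L 0 = - (k / 2) * ep\<^sup>2 * (cos a2 - cos sg) * (1 / (om + 1) + 1 / (om - 1))"
        unfolding gY_def asf2 asf0 c1 c2 by (simp add: algebra_simps power2_eq_square add_divide_distrib diff_divide_distrib)
      also have "\<dots> < 0"
      proof -
        have "cos (- sg) < cos a2" using a2b sg by (intro cos_monotone_minus_pi_0) auto
        then have "cos a2 - cos sg > 0" by simp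
        moreover have "1 / (om + 1) + 1 / (om - 1) > 0" using om1 by (simp add: add_pos_pos)
        ultimately show ?thesis using ep2 kL by (simp add: mult_pos_pos)
      qed
      finally have "y t2 < 0" using yt2 by simp
      moreover have "y t2 > 0" using ypos t2 by auto
      ultimately show False by simp
    qed
  qed
  have omsg: "om * sg = pi" using n n1 by simp
  have ep1: "ep = -1" using omsg by (simp add: ep_def)
  have csq: "sqrt c < 1/2"
  proof -
    have "sg = pi * sqrt c" using omsg c by (simp add: om_def field_simps)
    then show ?thesis using sg(2) by simp
  qed
  have small: "3 * x0 < L"
  proof -
    have "c < 1/4"
    proof -
      have "(sqrt c)\<^sup>2 < (1/2)\<^sup>2" using csq c by (intro power_strict_mono) auto
      then show ?thesis using c by (simp add: power2_eq_square)
    qed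
    then show ?thesis using x0 L by (simp add: c_def field_simps)
  qed
  interpret p: params x0 L using x0 L small by unfold_locales
  have cc: "p.cc = c" by (simp add: p.cc_def c_def)
  have sgeq: "p.sg = sg" using omsg c by (simp add: p.sg_eq cc om_def field_simps)
  have kkeq: "p.kk = k" using sg kL L by (simp add: p.kk_eq sgeq)
  have omeq: "p.om = om" using omsg sg by (simp add: p.om_def sgeq field_simps)
  have xe: "x t = sol_x x0 L t" if t: "t \<in> ?I" for t
  proof -
    have "\<And>s. s \<in> ?I \<Longrightarrow> (sol_x x0 L has_real_derivative x1 s) (at s within ?I)"
    proof -
      fix s assume s: "s \<in> ?I"
      have "(gX (-1) k om L has_real_derivative -1 * cos (om * asf k L s)) (at s)"
        by (rule gX_deriv[OF kL(2) inr[OF s]]) (use om1 in auto)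
      then show "(sol_x x0 L has_real_derivative x1 s) (at s within ?I)"
        using x1e[OF s] ep1 unfolding p.sol_x_gX[abs_def] kkeq omeq Phi_def
        by (simp add: has_field_derivative_at_within)
    qed
    from same_deriv_const[OF dx this t I0] show ?thesis using xs p.sol_x_0 by simp
  qed
  have ye: "y t = sol_y x0 L t" if t: "t \<in> ?I" for t
  proof -
    have "\<And>s. s \<in> ?I \<Longrightarrow> (sol_y x0 L has_real_derivative y1 s) (at s within ?I)"
    proof -
      fix s assume s: "s \<in> ?I"
      have "(gY (-1) k om L has_real_derivative -1 * sin (om * asf k L s)) (at s)"
        by (rule gY_deriv[OF kL(2) inr[OF s]]) (use om1 in auto)
      then have "((\<lambda>t. gY (-1) k om L t + pi * x0 / (p.sg * tan p.sg)) has_real_derivative -1 * sin (om * asf k L s)) (at s)"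
        by (auto intro!: derivative_eq_intros)
      then show "(sol_y x0 L has_real_derivative y1 s) (at s within ?I)"
        using y1e[OF s] ep1 unfolding p.sol_y_gY[abs_def] kkeq omeq Phi_def
        by (simp add: has_field_derivative_at_within)
    qed
    from same_deriv_const[OF dy this t I0] show ?thesis using ys p.sol_y_0 by simp
  qed
  show ?thesis using small lam_eq xe ye by blast
qed

context params
begin

definition "SS = {z::complex. Re z < L + kk} \<inter> {z. Re z > L - kk}"

lemma SS_open: "open SS" unfolding SS_def by (intro open_Int open_halfspace_Re_lt open_halfspace_Re_gt)

lemma SS_I: "t \<in> {0..2*L} \<Longrightarrow> complex_of_real t \<in> SS"
  using kk_gt by (auto simp: SS_def)

definition "AA = (\<lambda>z::complex. Arcsin ((z - of_real L) / of_real kk))"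

lemma AA_holo: "AA holomorphic_on SS"
proof -
  have "(Arcsin \<circ> (\<lambda>z. (z - of_real L) / of_real kk)) holomorphic_on SS"
  proof (rule holomorphic_on_compose_gen)
    show "(\<lambda>z. (z - of_real L) / complex_of_real kk) holomorphic_on SS"
      using kk_gt by (intro holomorphic_intros) auto
    show "Arcsin holomorphic_on {w. Im w = 0 \<longrightarrow> \<bar>Re w\<bar> < 1}"
      by (rule holomorphic_on_Arcsin) auto
    show "(\<lambda>z. (z - of_real L) / complex_of_real kk) ` SS \<subseteq> {w. Im w = 0 \<longrightarrow> \<bar>Re w\<bar> < 1}"
    proof
      fix w assume "w \<in> (\<lambda>z. (z - of_real L) / complex_of_real kk) ` SS"
      then obtain z where z: "z \<in> SS" "w = (z - of_real L) / of_real kk" by blast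
      have "Re w = (Re z - L) / kk" using z(2) by (simp add: Re_divide_of_real)
      moreover have "\<bar>Re z - L\<bar> < kk" using z(1) by (auto simp: SS_def)
      ultimately have "\<bar>Re w\<bar> < 1" using kk_gt by (simp add: abs_divide)
      then show "w \<in> {w. Im w = 0 \<longrightarrow> \<bar>Re w\<bar> < 1}" by simp
    qed
  qed
  then show ?thesis by (simp add: AA_def o_def)
qed

lemma AA_real: "t \<in> {0..2*L} \<Longrightarrow> AA (of_real t) = of_real (asf kk L t)"
proof -
  assume t: "t \<in> {0..2*L}"
  have "\<bar>(t - L) / kk\<bar> \<le> 1" using in_range[OF t] kk_gt by (simp add: abs_divide)
  moreover have "(of_real t - of_real L) / of_real kk = (of_real ((t - L) / kk) :: complex)" by simp
  ultimately show ?thesis by (simp add: AA_def asf_def of_real_arcsin)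
qed

definition "FX = (\<lambda>z. of_real (- kk / 2) * (sin (of_real (om + 1) * AA z) / of_real (om + 1) + sin (of_real (om - 1) * AA z) / of_real (om - 1)))"
definition "FY = (\<lambda>z. of_real (- kk / 2) * (- cos (of_real (om + 1) * AA z) / of_real (om + 1) - cos (of_real (om - 1) * AA z) / of_real (om - 1)) + of_real (pi * x0 / (sg * tan sg)))"

lemma smooth_x: "smooth_int 0 (2*L) (sol_x x0 L)"
proof (rule smooth_from_holo[OF _ SS_open SS_I])
  show "FX holomorphic_on SS" unfolding FX_def using om_ne by (intro holomorphic_intros AA_holo) auto
  fix t assume t: "t \<in> {0..2*L}"
  have "FX (of_real t) = of_real (sol_x x0 L t)"
    unfolding FX_def AA_real[OF t] sol_x_gX gX_def
    by (simp only: of_real_mult[symmetric] sin_of_real of_real_divide[symmetric] of_real_add[symmetric]) simp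
  then show "sol_x x0 L t = Re (FX (of_real t))" by simp
qed (use L in auto)

lemma smooth_y: "smooth_int 0 (2*L) (sol_y x0 L)"
proof (rule smooth_from_holo[OF _ SS_open SS_I])
  show "FY holomorphic_on SS" unfolding FY_def using om_ne by (intro holomorphic_intros AA_holo) auto
  fix t assume t: "t \<in> {0..2*L}"
  have "FY (of_real t) = of_real (sol_y x0 L t)"
    unfolding FY_def AA_real[OF t] sol_y_gY gY_def
    by (simp only: of_real_mult[symmetric] cos_of_real of_real_divide[symmetric] of_real_add[symmetric] of_real_minus[symmetric] of_real_diff[symmetric]) simp
  then show "sol_y x0 L t = Re (FY (of_real t))" by simp
qed (use L in auto)

end

lemma sin_neg_lt: "- pi < x \<Longrightarrow> x < 0 \<Longrightarrow> sin x < 0"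
  using sin_gt_zero[of "- x"] by simp

lemma cos_neg_lt: "- pi < x \<Longrightarrow> x < - (pi/2) \<Longrightarrow> cos x < 0"
  using cos_gt_zero_pi[of "x + pi"] by (simp add: cos_add)

lemma hderiv_1: "hderiv a b 1 f = dwithin a b f" by (simp add: hderiv_def)
lemma hderiv_2: "hderiv a b 2 f = dwithin a b (hderiv a b 1 f)" by (simp add: hderiv_def numeral_2_eq_2)

context params
begin

definition "X1 t = - cos (om * asf kk L t)"
definition "Y1 t = - sin (om * asf kk L t)"
definition "Hs t = om / sqrt (kk\<^sup>2 - (t - L)\<^sup>2)"

lemma om_pos: "om > 0" using om_gt by simp

lemma dsx: "t \<in> {0..2*L} \<Longrightarrow> (sol_x x0 L has_real_derivative X1 t) (at t)"
proof -
  assume t: "t \<in> {0..2*L}"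
  have "sol_x x0 L = gX (-1) kk om L" using sol_x_gX by (simp add: fun_eq_iff)
  then show ?thesis using gX_deriv[OF kk_gt(2) in_range[OF t] om_ne(3,4), of "-1"] by (simp add: X1_def)
qed

lemma dsy: "t \<in> {0..2*L} \<Longrightarrow> (sol_y x0 L has_real_derivative Y1 t) (at t)"
proof -
  assume t: "t \<in> {0..2*L}"
  have "sol_y x0 L = (\<lambda>t. gY (-1) kk om L t + pi * x0 / (sg * tan sg))" using sol_y_gY by (simp add: fun_eq_iff)
  moreover have "((\<lambda>t. gY (-1) kk om L t + pi * x0 / (sg * tan sg)) has_real_derivative -1 * sin (om * asf kk L t)) (at t)"
    using gY_deriv[OF kk_gt(2) in_range[OF t] om_ne(3,4), of "-1"] by (auto intro!: derivative_eq_intros)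
  ultimately show ?thesis by (simp add: Y1_def)
qed

lemma dX1: "t \<in> {0..2*L} \<Longrightarrow> (X1 has_real_derivative Hs t * sin (om * asf kk L t)) (at t)"
proof -
  assume t: "t \<in> {0..2*L}"
  show ?thesis unfolding X1_def[abs_def]
    by (rule DERIV_cong[OF DERIV_minus[OF DERIV_fun_cos[OF DERIV_cmult[OF asf_deriv[OF kk_gt(2) in_range[OF t]]]]]])
       (simp add: Hs_def)
qed

lemma dY1: "t \<in> {0..2*L} \<Longrightarrow> (Y1 has_real_derivative - Hs t * cos (om * asf kk L t)) (at t)"
proof -
  assume t: "t \<in> {0..2*L}"
  show ?thesis unfolding Y1_def[abs_def]
    by (rule DERIV_cong[OF DERIV_minus[OF DERIV_fun_sin[OF DERIV_cmult[OF asf_deriv[OF kk_gt(2) in_range[OF t]]]]]])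
       (simp add: Hs_def)
qed

lemma ab: "(0::real) < 2 * L" using L by simp

lemma hd1x: "t \<in> {0..2*L} \<Longrightarrow> hderiv 0 (2*L) 1 (sol_x x0 L) t = X1 t"
  unfolding hderiv_1
  by (rule dwithin_eq[OF ab], assumption, unfold has_real_derivative_iff_has_vector_derivative[symmetric])
     (rule has_field_derivative_at_within[OF dsx])

lemma hd1y: "t \<in> {0..2*L} \<Longrightarrow> hderiv 0 (2*L) 1 (sol_y x0 L) t = Y1 t"
  unfolding hderiv_1
  by (rule dwithin_eq[OF ab], assumption, unfold has_real_derivative_iff_has_vector_derivative[symmetric])
     (rule has_field_derivative_at_within[OF dsy])

lemma hd2x: "t \<in> {0..2*L} \<Longrightarrow> hderiv 0 (2*L) 2 (sol_x x0 L) t = Hs t * sin (om * asf kk L t)"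
  unfolding hderiv_2
  by (rule dwithin_cong[OF ab], assumption, rule hd1x, assumption, unfold has_real_derivative_iff_has_vector_derivative[symmetric])
     (rule has_field_derivative_at_within[OF dX1])

lemma hd2y: "t \<in> {0..2*L} \<Longrightarrow> hderiv 0 (2*L) 2 (sol_y x0 L) t = - Hs t * cos (om * asf kk L t)"
  unfolding hderiv_2
  by (rule dwithin_cong[OF ab], assumption, rule hd1y, assumption, unfold has_real_derivative_iff_has_vector_derivative[symmetric])
     (rule has_field_derivative_at_within[OF dY1])

lemma XY1: "(X1 t)\<^sup>2 + (Y1 t)\<^sup>2 = 1" by (simp add: X1_def Y1_def)

lemma Hs_pos: "t \<in> {0..2*L} \<Longrightarrow> Hs t > 0"
  using sqrt_pos_k[OF kk_gt(2) in_range] om_pos by (simp add: Hs_def)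

lemma curv: "t \<in> {0..2*L} \<Longrightarrow> curvature 0 (2*L) (sol_x x0 L) (sol_y x0 L) t = Hs t"
proof -
  assume t: "t \<in> {0..2*L}"
  have "X1 t * (- Hs t * cos (om * asf kk L t)) - Y1 t * (Hs t * sin (om * asf kk L t)) = Hs t"
    by (simp add: X1_def Y1_def algebra_simps) (metis distrib_left mult.right_neutral sin_cos_squared_add3)
  then show ?thesis unfolding curvature_def hd1x[OF t] hd1y[OF t] hd2x[OF t] hd2y[OF t] XY1 by simp
qed

lemma qf_eq: "t \<in> {0..2*L} \<Longrightarrow> inverse ((curvature 0 (2*L) (sol_x x0 L) (sol_y x0 L) t)\<^sup>2) = (kk\<^sup>2 - (t - L)\<^sup>2) / om\<^sup>2"
proof -
  assume t: "t \<in> {0..2*L}"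
  have p: "kk\<^sup>2 - (t - L)\<^sup>2 > 0" using sqrt_pos_k[OF kk_gt(2) in_range[OF t]] by simp
  show ?thesis unfolding curv[OF t] Hs_def using p om_pos by (simp add: power_divide field_simps)
qed

lemma eqn: "s \<in> {0..2*L} \<Longrightarrow> 2 + hderiv 0 (2*L) 2 (\<lambda>t. inverse ((curvature 0 (2*L) (sol_x x0 L) (sol_y x0 L) t)\<^sup>2)) s = 2 * L / (L + x0)"
proof -
  assume s: "s \<in> {0..2*L}"
  have h1: "hderiv 0 (2*L) 1 (\<lambda>t. inverse ((curvature 0 (2*L) (sol_x x0 L) (sol_y x0 L) t)\<^sup>2)) t = - 2 * (t - L) / om\<^sup>2"
    if t: "t \<in> {0..2*L}" for t
    unfolding hderiv_1
  proof (rule dwithin_cong[OF ab t])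
    show "\<And>s. s \<in> {0..2 * L} \<Longrightarrow> inverse ((curvature 0 (2 * L) (sol_x x0 L) (sol_y x0 L) s)\<^sup>2) = (kk\<^sup>2 - (s - L)\<^sup>2) / om\<^sup>2"
      by (rule qf_eq)
    have "((\<lambda>s. kk\<^sup>2 - (s - L)\<^sup>2) has_real_derivative - 2 * (t - L)) (at t within {0..2*L})"
      by (auto intro!: derivative_eq_intros)
    from DERIV_cdivide[OF this, of "om\<^sup>2"]
    have "((\<lambda>s. (kk\<^sup>2 - (s - L)\<^sup>2) / om\<^sup>2) has_real_derivative - 2 * (t - L) / om\<^sup>2) (at t within {0..2*L})" .
    then show "((\<lambda>s. (kk\<^sup>2 - (s - L)\<^sup>2) / om\<^sup>2) has_vector_derivative - 2 * (t - L) / om\<^sup>2) (at t within {0..2*L})"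
      by (simp add: has_real_derivative_iff_has_vector_derivative)
  qed
  have "hderiv 0 (2*L) 2 (\<lambda>t. inverse ((curvature 0 (2*L) (sol_x x0 L) (sol_y x0 L) t)\<^sup>2)) s = - 2 / om\<^sup>2"
    unfolding hderiv_2
  proof (rule dwithin_cong[OF ab s])
    show "\<And>t. t \<in> {0..2 * L} \<Longrightarrow> hderiv 0 (2 * L) 1 (\<lambda>t. inverse ((curvature 0 (2 * L) (sol_x x0 L) (sol_y x0 L) t)\<^sup>2)) t = - 2 * (t - L) / om\<^sup>2"
      by (rule h1)
    have "((\<lambda>t. - 2 * (t - L)) has_real_derivative - 2) (at s within {0..2*L})"
      by (auto intro!: derivative_eq_intros)
    from DERIV_cdivide[OF this, of "om\<^sup>2"]
    have "((\<lambda>t. - 2 * (t - L) / om\<^sup>2) has_real_derivative - 2 / om\<^sup>2) (at s within {0..2*L})" .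
    then show "((\<lambda>t. - 2 * (t - L) / om\<^sup>2) has_vector_derivative - 2 / om\<^sup>2) (at s within {0..2*L})"
      by (simp add: has_real_derivative_iff_has_vector_derivative)
  qed
  moreover have "2 + - 2 / om\<^sup>2 = 2 * L / (L + x0)"
    unfolding om_sq using x0 L by (simp add: cc_def field_simps)
  ultimately show ?thesis by simp
qed

end

context params
begin

lemma asf_less: "t \<in> {0..2*L} \<Longrightarrow> u \<in> {0..2*L} \<Longrightarrow> asf kk L t < asf kk L u \<longleftrightarrow> t < u"
proof -
  assume t: "t \<in> {0..2*L}" and u: "u \<in> {0..2*L}"
  have "\<bar>(t - L) / kk\<bar> \<le> 1" "\<bar>(u - L) / kk\<bar> \<le> 1"
    using in_range[OF t] in_range[OF u] kk_gt by (simp_all add: abs_divide)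
  then have "asf kk L t < asf kk L u \<longleftrightarrow> (t - L) / kk < (u - L) / kk"
    unfolding asf_def by (rule arcsin_less_mono)
  also have "\<dots> \<longleftrightarrow> t < u" using kk_gt by (simp add: divide_strict_right_mono_neg field_simps)
  finally show ?thesis .
qed

lemma asf_L: "asf kk L L = 0" by (simp add: asf_def)

lemma Y1_pos: "0 < t \<Longrightarrow> t < L \<Longrightarrow> Y1 t > 0"
proof -
  assume t: "0 < t" "t < L"
  have tI: "t \<in> {0..2*L}" and I0: "0 \<in> {0..2*L}" and IL: "L \<in> {0..2*L}" using t L by auto
  have a: "- sg < asf kk L t" "asf kk L t < 0"
    using asf_less[OF I0 tI] asf_less[OF tI IL] t asf_0 asf_L by auto
  have "om * (- sg) < om * asf kk L t" "om * asf kk L t < om * 0"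
    using a om_pos by (intro mult_strict_left_mono; simp)+
  then have "- pi < om * asf kk L t" "om * asf kk L t < 0" using om_sg by auto
  then show ?thesis unfolding Y1_def using sin_neg_lt by simp
qed

lemma dy_within: "t \<in> {0..2*L} \<Longrightarrow> (sol_y x0 L has_real_derivative Y1 t) (at t within {0..2*L})"
  by (rule has_field_derivative_at_within[OF dsy])

lemma dx_within: "t \<in> {0..2*L} \<Longrightarrow> (sol_x x0 L has_real_derivative X1 t) (at t within {0..2*L})"
  by (rule has_field_derivative_at_within[OF dsx])

lemma y_inc: "0 \<le> u \<Longrightarrow> u < v \<Longrightarrow> v \<le> L \<Longrightarrow> sol_y x0 L u < sol_y x0 L v"
  by (rule strict_inc_within[OF dy_within]) (use Y1_pos L in auto)

lemma ypos: "t \<in> {0<..<2*L} \<Longrightarrow> sol_y x0 L t > 0"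
proof -
  assume t: "t \<in> {0<..<2*L}"
  show ?thesis
  proof (cases "t \<le> L")
    case True
    then show ?thesis using y_inc[of 0 t] sol_y_0 t by auto
  next
    case False
    have "sol_y x0 L (2 * L - t) = sol_y x0 L t" using sol_y_refl[of t] in_range[of t] t by auto
    moreover have "sol_y x0 L 0 < sol_y x0 L (2 * L - t)" using y_inc[of 0 "2*L - t"] t False by auto
    ultimately show ?thesis using sol_y_0 by simp
  qed
qed

definition "ts = L - kk * sin (sg / 2)"

lemma ts_bounds: "0 < ts" "ts < L"
proof -
  have "sin (sg / 2) < sin sg" using sg_bounds by (intro sin_monotone_2pi) auto
  moreover have "0 < sin (sg / 2)" using sg_bounds by (intro sin_gt_zero) auto
  ultimately have "kk * sin (sg / 2) < kk * sin sg" "0 < kk * sin (sg / 2)"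
    using kk_gt by auto
  then show "0 < ts" "ts < L" using kk_sin by (auto simp: ts_def)
qed

lemma asf_ts: "asf kk L ts = - (sg / 2)"
proof -
  have "(ts - L) / kk = - sin (sg / 2)" using kk_gt by (simp add: ts_def)
  then have "asf kk L ts = arcsin (- sin (sg / 2))" by (simp add: asf_def)
  also have "\<dots> = - (sg / 2)"
  proof -
    have "arcsin (sin (sg / 2)) = sg / 2" by (rule arcsin_sin) (use sg_bounds in auto)
    moreover have "-1 \<le> sin (sg / 2)" "sin (sg / 2) \<le> 1" by auto
    ultimately show ?thesis by (simp add: arcsin_minus)
  qed
  finally show ?thesis .
qed

lemma X1_pos: "0 < t \<Longrightarrow> t < ts \<Longrightarrow> X1 t > 0"
proof -
  assume t: "0 < t" "t < ts"
  have tI: "t \<in> {0..2*L}" and I0: "0 \<in> {0..2*L}" and IT: "ts \<in> {0..2*L}" using t ts_bounds L by auto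
  have a: "- sg < asf kk L t" "asf kk L t < - (sg / 2)"
    using asf_less[OF I0 tI] asf_less[OF tI IT] t asf_0 asf_ts by auto
  have "om * (- sg) < om * asf kk L t" "om * asf kk L t < om * (- (sg / 2))"
    using a om_pos by (intro mult_strict_left_mono; simp)+
  then have "- pi < om * asf kk L t" "om * asf kk L t < - (pi / 2)" using om_sg by auto
  then show ?thesis unfolding X1_def using cos_neg_lt by simp
qed

lemma X1_neg: "ts < t \<Longrightarrow> t < L \<Longrightarrow> X1 t < 0"
proof -
  assume t: "ts < t" "t < L"
  have tI: "t \<in> {0..2*L}" and IL: "L \<in> {0..2*L}" and IT: "ts \<in> {0..2*L}" using t ts_bounds L by auto
  have a: "- (sg / 2) < asf kk L t" "asf kk L t < 0"
    using asf_less[OF IT tI] asf_less[OF tI IL] t asf_L asf_ts by auto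
  have "om * (- (sg / 2)) < om * asf kk L t" "om * asf kk L t < om * 0"
    using a om_pos by (intro mult_strict_left_mono; simp)+
  then have "- (pi / 2) < om * asf kk L t" "om * asf kk L t < pi / 2" using om_sg by auto
  then show ?thesis unfolding X1_def using cos_gt_zero_pi by simp
qed

lemma x_L: "sol_x x0 L L = 0"
  using sol_x_refl[of L] kk_gt by simp

lemma xpos: "0 \<le> t \<Longrightarrow> t < L \<Longrightarrow> sol_x x0 L t > 0"
proof -
  assume t: "0 \<le> t" "t < L"
  show ?thesis
  proof (cases "t < ts")
    case True
    show ?thesis
    proof (cases "t = 0")
      case True then show ?thesis using sol_x_0 x0 by simp
    next
      case False
      have "sol_x x0 L 0 < sol_x x0 L t"
        by (rule strict_inc_within[OF dx_within]) (use t False True X1_pos L in auto)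
      then show ?thesis using sol_x_0 x0 by simp
    qed
  next
    case False
    have "sol_x x0 L t > sol_x x0 L L"
      by (rule strict_dec_within[OF dx_within]) (use t False X1_neg L in auto)
    then show ?thesis using x_L by simp
  qed
qed

lemma inj: "inj_on (\<lambda>t. (sol_x x0 L t, sol_y x0 L t)) {0..2*L}"
proof (rule inj_onI)
  fix s t assume s: "s \<in> {0..2*L}" and t: "t \<in> {0..2*L}"
    and e: "(sol_x x0 L s, sol_y x0 L s) = (sol_x x0 L t, sol_y x0 L t)"
  define r where "r u = (if u \<le> L then u else 2 * L - u)" for u
  have yr: "sol_y x0 L (r u) = sol_y x0 L u" if "u \<in> {0..2*L}" for u
    using sol_y_refl[of u] in_range[OF that] by (auto simp: r_def)
  have rI: "0 \<le> r u \<and> r u \<le> L" if "u \<in> {0..2*L}" for u using that by (auto simp: r_def)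
  have "r s = r t"
  proof (rule ccontr)
    assume "r s \<noteq> r t"
    then have "r s < r t \<or> r t < r s" by auto
    then have "sol_y x0 L (r s) \<noteq> sol_y x0 L (r t)"
      using y_inc rI[OF s] rI[OF t] by (metis less_irrefl)
    then show False using e yr[OF s] yr[OF t] by simp
  qed
  show "s = t"
  proof (cases "s \<le> L")
    case sL: True
    show ?thesis
    proof (cases "t \<le> L")
      case True then show ?thesis using \<open>r s = r t\<close> sL by (simp add: r_def)
    next
      case False
      then have st: "s = 2 * L - t" using \<open>r s = r t\<close> sL by (simp add: r_def)
      then have "sol_x x0 L s = - sol_x x0 L t" using sol_x_refl[of t] in_range[OF t] by simp
      then have "sol_x x0 L s = 0" using e by simp
      moreover have "sol_x x0 L s > 0" using xpos[of s] st False s by auto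
      ultimately show ?thesis by simp
    qed
  next
    case sL: False
    show ?thesis
    proof (cases "t \<le> L")
      case True
      then have st: "t = 2 * L - s" using \<open>r s = r t\<close> sL by (simp add: r_def)
      then have "sol_x x0 L t = - sol_x x0 L s" using sol_x_refl[of s] in_range[OF s] by simp
      then have "sol_x x0 L t = 0" using e by simp
      moreover have "sol_x x0 L t > 0" using xpos[of t] st sL t by auto
      ultimately show ?thesis by simp
    next
      case False then show ?thesis using \<open>r s = r t\<close> sL by (simp add: r_def)
    qed
  qed
qed

lemma vsym: "vert_symmetric 0 (2*L) (sol_x x0 L) (sol_y x0 L)"
  unfolding vert_symmetric_def
proof
  show "(\<lambda>p. (- fst p, snd p)) ` (\<lambda>t. (sol_x x0 L t, sol_y x0 L t)) ` {0..2 * L} \<subseteq> (\<lambda>t. (sol_x x0 L t, sol_y x0 L t)) ` {0..2 * L}"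
  proof
    fix p assume "p \<in> (\<lambda>p. (- fst p, snd p)) ` (\<lambda>t. (sol_x x0 L t, sol_y x0 L t)) ` {0..2 * L}"
    then obtain t where t: "t \<in> {0..2*L}" "p = (- sol_x x0 L t, sol_y x0 L t)" by auto
    then have "p = (sol_x x0 L (2*L - t), sol_y x0 L (2*L - t))"
      using sol_x_refl[of t] sol_y_refl[of t] in_range[OF t(1)] by simp
    moreover have "2*L - t \<in> {0..2*L}" using t by auto
    ultimately show "p \<in> (\<lambda>t. (sol_x x0 L t, sol_y x0 L t)) ` {0..2 * L}" by blast
  qed
  show "(\<lambda>t. (sol_x x0 L t, sol_y x0 L t)) ` {0..2 * L} \<subseteq> (\<lambda>p. (- fst p, snd p)) ` (\<lambda>t. (sol_x x0 L t, sol_y x0 L t)) ` {0..2 * L}"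
  proof
    fix p assume "p \<in> (\<lambda>t. (sol_x x0 L t, sol_y x0 L t)) ` {0..2 * L}"
    then obtain t where t: "t \<in> {0..2*L}" "p = (sol_x x0 L t, sol_y x0 L t)" by auto
    then have "p = (\<lambda>p. (- fst p, snd p)) (sol_x x0 L (2*L - t), sol_y x0 L (2*L - t))"
      using sol_x_refl[of t] sol_y_refl[of t] in_range[OF t(1)] by simp
    moreover have "2*L - t \<in> {0..2*L}" using t by auto
    ultimately show "p \<in> (\<lambda>p. (- fst p, snd p)) ` (\<lambda>t. (sol_x x0 L t, sol_y x0 L t)) ` {0..2 * L}" by blast
  qed
qed

lemma exist: "solves x0 L (2 * L / (L + x0)) (sol_x x0 L) (sol_y x0 L)"
  unfolding solves_def admissible_def arclength_param_def
proof (intro conjI ballI)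
  show "0 < 2 * L / (L + x0)" using L x0 by simp
  show "smooth_int 0 (2 * L) (sol_x x0 L)" by (rule smooth_x)
  show "smooth_int 0 (2 * L) (sol_y x0 L)" by (rule smooth_y)
  fix t assume t: "t \<in> {0..2*L}"
  show "(hderiv 0 (2 * L) 1 (sol_x x0 L) t, hderiv 0 (2 * L) 1 (sol_y x0 L) t) \<noteq> (0, 0)"
    unfolding hd1x[OF t] hd1y[OF t] using XY1[of t] by auto
  show "0 < curvature 0 (2 * L) (sol_x x0 L) (sol_y x0 L) t" using curv[OF t] Hs_pos[OF t] by simp
  show "(hderiv 0 (2 * L) 1 (sol_x x0 L) t)\<^sup>2 + (hderiv 0 (2 * L) 1 (sol_y x0 L) t)\<^sup>2 = 1"
    unfolding hd1x[OF t] hd1y[OF t] by (rule XY1)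
next
  show "inj_on (\<lambda>t. (sol_x x0 L t, sol_y x0 L t)) {0..2 * L}" by (rule inj)
  show "sol_x x0 L 0 = x0" by (rule sol_x_0)
  show "sol_y x0 L 0 = 0" by (rule sol_y_0)
  show "sol_x x0 L (2 * L) = - x0" by (rule sol_x_2L)
  show "sol_y x0 L (2 * L) = 0" by (rule sol_y_2L)
  show "vert_symmetric 0 (2 * L) (sol_x x0 L) (sol_y x0 L)" by (rule vsym)
  show "hderiv 0 (2 * L) 1 (sol_y x0 L) 0 = 0"
  proof -
    have I0: "0 \<in> {0..2*L}" using L by simp
    show ?thesis unfolding hd1y[OF I0] by (simp add: Y1_def asf_0 om_sg)
  qed
  show "hderiv 0 (2 * L) 1 (sol_y x0 L) (2 * L) = 0"
  proof -
    have I2: "2*L \<in> {0..2*L}" using L by simp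
    show ?thesis unfolding hd1y[OF I2] by (simp add: Y1_def asf_2L om_sg)
  qed
next
  fix t assume "t \<in> {0<..<2 * L}"
  then show "0 < sol_y x0 L t" by (rule ypos)
next
  fix s assume "s \<in> {0..2 * L}"
  then show "2 + hderiv 0 (2 * L) 2 (\<lambda>t. inverse ((curvature 0 (2 * L) (sol_x x0 L) (sol_y x0 L) t)\<^sup>2)) s = 2 * L / (L + x0)"
    by (rule eqn)
qed

end

theorem mainTheorem6:
  fixes x0 L :: real
  assumes "x0 > 0" and "L > 0"
  shows "((\<exists>lam x y. solves x0 L lam x y \<and>
            (\<forall>lam' x' y'. solves x0 L lam' x' y' \<longrightarrow>
               lam' = lam \<and> (\<forall>s\<in>{0..2*L}. x' s = x s \<and> y' s = y s)))
         \<longleftrightarrow> 3 * x0 < L) \<and>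
         (3 * x0 < L \<longrightarrow>
         solves x0 L (2 * L / (L + x0)) (sol_x x0 L) (sol_y x0 L) \<and>
         (\<forall>lam x y. solves x0 L lam x y \<longrightarrow>
            lam = 2 * L / (L + x0) \<and>
            (\<forall>s\<in>{0..2*L}. x s = sol_x x0 L s \<and> y s = sol_y x0 L s)))"
proof -
  have U: "\<And>lam x y. solves x0 L lam x y \<Longrightarrow> 3 * x0 < L \<and> lam = 2 * L / (L + x0) \<and>
      (\<forall>s\<in>{0..2*L}. x s = sol_x x0 L s \<and> y s = sol_y x0 L s)"
    using uniq assms by blast
  show ?thesis
  proof (intro conjI impI)
    show "(\<exists>lam x y. solves x0 L lam x y \<and>
            (\<forall>lam' x' y'. solves x0 L lam' x' y' \<longrightarrow>
               lam' = lam \<and> (\<forall>s\<in>{0..2*L}. x' s = x s \<and> y' s = y s)))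
         \<longleftrightarrow> 3 * x0 < L"
    proof
      assume "\<exists>lam x y. solves x0 L lam x y \<and>
            (\<forall>lam' x' y'. solves x0 L lam' x' y' \<longrightarrow>
               lam' = lam \<and> (\<forall>s\<in>{0..2*L}. x' s = x s \<and> y' s = y s))"
      then obtain lam x y where "solves x0 L lam x y" by blast
      then show "3 * x0 < L" using U by blast
    next
      assume s: "3 * x0 < L"
      interpret p: params x0 L using assms s by unfold_locales
      show "\<exists>lam x y. solves x0 L lam x y \<and>
            (\<forall>lam' x' y'. solves x0 L lam' x' y' \<longrightarrow>
               lam' = lam \<and> (\<forall>s\<in>{0..2*L}. x' s = x s \<and> y' s = y s))"
        using p.exist U by blast
    qed
  next
    assume s: "3 * x0 < L"
    interpret p: params x0 L using assms s by unfold_locales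
    show "solves x0 L (2 * L / (L + x0)) (sol_x x0 L) (sol_y x0 L)" by (rule p.exist)
  next
    show "\<forall>lam x y. solves x0 L lam x y \<longrightarrow>
            lam = 2 * L / (L + x0) \<and>
            (\<forall>s\<in>{0..2*L}. x s = sol_x x0 L s \<and> y s = sol_y x0 L s)"
      using U by blast
  qed
qed

end
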